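(* Let $n\ge 2$. Every harmonic function $u$ on $\mathbb R^n$ which is universal for uniform convergence is also universal for convergence in measure; that is, if the set of translates $\{u(\cdot+a): a\in\mathbb R^n\}$ is dense in the space of all harmonic functions on $\mathbb R^n$ with the topology of local uniform convergence, then for every measurable function $v:\mathbb R^n\to\mathbb R$ there is a sequence $(a_j)$ in $\mathbb R^n$ such that $u(\cdot+a_j)\to v$ in Lebesgue measure on every compact subset of $\mathbb R^n$.
   Context: Convergence in measure on a compact set $K$ means: for every $\epsilon>0$, the Lebesgue measure of $\{x\in K: |u(x+a_j)-v(x)|>\epsilon\}$ tends to $0$ as $j\to\infty$. *)

theory Defs
  imports "HOL-Analysis.Analysis"
begin

definition harmonic :: "(real^'n \<Rightarrow> real) \<Rightarrow> bool" where
  "harmonic u \<longleftrightarrow>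
     (\<exists>(u' :: real^'n \<Rightarrow> ((real^'n) \<Rightarrow>\<^sub>L real))
        (u'' :: real^'n \<Rightarrow> ((real^'n) \<Rightarrow>\<^sub>L ((real^'n) \<Rightarrow>\<^sub>L real))).
        (\<forall>x. (u has_derivative blinfun_apply (u' x)) (at x)) \<and>
        (\<forall>x. (u' has_derivative blinfun_apply (u'' x)) (at x)) \<and>
        continuous_on UNIV u'' \<and>
        (\<forall>x. (\<Sum>i\<in>UNIV. blinfun_apply (blinfun_apply (u'' x) (axis i 1)) (axis i 1)) = 0))"

definition universal_uniform :: "(real^'n \<Rightarrow> real) \<Rightarrow> bool" where
  "universal_uniform u \<longleftrightarrow>
     (\<forall>h K e. harmonic h \<longrightarrow> compact K \<longrightarrow> e > 0 \<longrightarrow>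
        (\<exists>a. \<forall>x\<in>K. \<bar>u (x + a) - h x\<bar> < e))"

end

theory Submission
  imports Defs "HOL-Computational_Algebra.Polynomial"
begin

definition capprox :: "complex set \<Rightarrow> (complex \<Rightarrow> complex) \<Rightarrow> bool" where
  "capprox E f \<longleftrightarrow> (\<forall>e>0. \<exists>p. \<forall>z\<in>E. cmod (f z - poly p z) < e)"

lemma capprox_poly: "capprox E (poly p)"
  unfolding capprox_def by (intro allI impI exI[of _ p]) auto

lemma capprox_const: "capprox E (\<lambda>z. c)"
proof -
  have "poly [:c:] = (\<lambda>z. c)" by (rule ext) simp
  then show ?thesis using capprox_poly[of E "[:c:]"] by simp
qed

lemma capprox_id: "capprox E (\<lambda>z. z)"
proof -
  have "poly [:0,1:] = (\<lambda>z::complex. z)" by (rule ext) simp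
  then show ?thesis using capprox_poly[of E "[:0,1:]"] by simp
qed

lemma capprox_add:
  assumes "capprox E f" "capprox E g"
  shows "capprox E (\<lambda>z. f z + g z)"
  unfolding capprox_def
proof (intro allI impI)
  fix e :: real assume e: "e > 0"
  obtain p where p: "\<forall>z\<in>E. cmod (f z - poly p z) < e/2"
    using assms(1) e unfolding capprox_def by (meson half_gt_zero)
  obtain q where q: "\<forall>z\<in>E. cmod (g z - poly q z) < e/2"
    using assms(2) e unfolding capprox_def by (meson half_gt_zero)
  show "\<exists>p. \<forall>z\<in>E. cmod (f z + g z - poly p z) < e"
  proof (intro exI[of _ "p+q"] ballI)
    fix z assume z: "z \<in> E"
    have "cmod (f z + g z - poly (p+q) z) = cmod ((f z - poly p z) + (g z - poly q z))"
      by (simp add: algebra_simps)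
    also have "\<dots> \<le> cmod (f z - poly p z) + cmod (g z - poly q z)" by (rule norm_triangle_ineq)
    also have "\<dots> < e" using p q z by fastforce
    finally show "cmod (f z + g z - poly (p+q) z) < e" .
  qed
qed

lemma capprox_cmult:
  assumes "capprox E f"
  shows "capprox E (\<lambda>z. c * f z)"
  unfolding capprox_def
proof (intro allI impI)
  fix e :: real assume e: "e > 0"
  have c1: "cmod c + 1 > 0" by (smt (verit) norm_ge_zero)
  have e': "e / (cmod c + 1) > 0" using e c1 by (rule divide_pos_pos)
  obtain p where p: "\<forall>z\<in>E. cmod (f z - poly p z) < e / (cmod c + 1)"
    using assms e' unfolding capprox_def by blast
  show "\<exists>p. \<forall>z\<in>E. cmod (c * f z - poly p z) < e"
  proof (intro exI[of _ "smult c p"] ballI)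
    fix z assume z: "z \<in> E"
    have "cmod (c * f z - poly (smult c p) z) = cmod c * cmod (f z - poly p z)"
      by (simp add: algebra_simps norm_mult[symmetric])
    also have "\<dots> \<le> (cmod c + 1) * cmod (f z - poly p z)"
      by (simp add: mult_right_mono)
    also have "\<dots> < (cmod c + 1) * (e / (cmod c + 1))"
      using p z c1 by (intro mult_strict_left_mono) auto
    also have "\<dots> = e" using c1 by simp
    finally show "cmod (c * f z - poly (smult c p) z) < e" .
  qed
qed

lemma capprox_mult:
  assumes "capprox E f" "capprox E g" "\<And>z. z \<in> E \<Longrightarrow> cmod (f z) \<le> B" "\<And>z. z \<in> E \<Longrightarrow> cmod (g z) \<le> B"
  shows "capprox E (\<lambda>z. f z * g z)"
  unfolding capprox_def
proof (intro allI impI)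
  fix e :: real assume e: "e > 0"
  define d where "d = min 1 (e / (2 * \<bar>B\<bar> + 2))"
  have d: "d > 0" "d \<le> 1" "d * (2 * \<bar>B\<bar> + 1) < e"
  proof -
    show "d > 0" using e by (simp add: d_def add_pos_nonneg)
    show "d \<le> 1" by (simp add: d_def)
    have "d * (2 * \<bar>B\<bar> + 1) \<le> (e / (2 * \<bar>B\<bar> + 2)) * (2 * \<bar>B\<bar> + 1)"
      by (intro mult_right_mono) (auto simp: d_def)
    also have "\<dots> < e"
      using e by (simp add: field_simps)
    finally show "d * (2 * \<bar>B\<bar> + 1) < e" .
  qed
  obtain p where p: "\<forall>z\<in>E. cmod (f z - poly p z) < d"
    using assms(1) d unfolding capprox_def by blast
  obtain q where q: "\<forall>z\<in>E. cmod (g z - poly q z) < d"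
    using assms(2) d unfolding capprox_def by blast
  show "\<exists>p. \<forall>z\<in>E. cmod (f z * g z - poly p z) < e"
  proof (intro exI[of _ "p*q"] ballI)
    fix z assume z: "z \<in> E"
    have fq: "cmod (poly q z) \<le> \<bar>B\<bar> + 1"
    proof -
      have "cmod (poly q z) \<le> cmod (g z) + cmod (poly q z - g z)"
        by (rule norm_triangle_sub)
      moreover have "cmod (poly q z - g z) < d" using q z by (simp add: norm_minus_commute)
      ultimately show ?thesis using assms(4)[OF z] d(2) by linarith
    qed
    have "cmod (f z * g z - poly (p*q) z) = cmod ((f z - poly p z) * poly q z + f z * (g z - poly q z))"
      by (simp add: algebra_simps)
    also have "\<dots> \<le> cmod (f z - poly p z) * cmod (poly q z) + cmod (f z) * cmod (g z - poly q z)"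
      by (rule order_trans[OF norm_triangle_ineq]) (simp add: norm_mult)
    also have "\<dots> \<le> d * (\<bar>B\<bar> + 1) + \<bar>B\<bar> * d"
      using p q z fq assms(3)[OF z] d(1)
      by (intro add_mono mult_mono) auto
    also have "\<dots> = d * (2 * \<bar>B\<bar> + 1)" by (simp add: algebra_simps)
    also have "\<dots> < e" by (rule d(3))
    finally show "cmod (f z * g z - poly (p*q) z) < e" .
  qed
qed

lemma capprox_limit:
  assumes "\<And>e. e > 0 \<Longrightarrow> \<exists>g. capprox E g \<and> (\<forall>z\<in>E. cmod (f z - g z) < e)"
  shows "capprox E f"
  unfolding capprox_def
proof (intro allI impI)
  fix e :: real assume e: "e > 0"
  obtain g where g: "capprox E g" "\<forall>z\<in>E. cmod (f z - g z) < e/2"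
    using assms[of "e/2"] e by auto
  obtain p where p: "\<forall>z\<in>E. cmod (g z - poly p z) < e/2"
    using g(1) e unfolding capprox_def by (meson half_gt_zero)
  show "\<exists>p. \<forall>z\<in>E. cmod (f z - poly p z) < e"
  proof (intro exI[of _ p] ballI)
    fix z assume z: "z \<in> E"
    have "cmod (f z - poly p z) \<le> cmod (f z - g z) + cmod (g z - poly p z)"
      using norm_triangle_ineq[of "f z - g z" "g z - poly p z"] by simp
    also have "\<dots> < e" using g(2) p z by fastforce
    finally show "cmod (f z - poly p z) < e" .
  qed
qed


lemma capprox_power:
  assumes "capprox E q" "\<And>z. z \<in> E \<Longrightarrow> cmod (q z) \<le> 1"
  shows "capprox E (\<lambda>z. q z ^ k)"
proof (induction k)
  case 0
  then show ?case using capprox_const[of E 1] by simp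
next
  case (Suc k)
  have "capprox E (\<lambda>z. q z * q z ^ k)"
  proof (rule capprox_mult[OF assms(1) Suc.IH])
    fix z assume z: "z \<in> E"
    show "cmod (q z) \<le> 1" using assms(2)[OF z] .
    have "cmod (q z ^ k) = cmod (q z) ^ k" by (simp add: norm_power)
    also have "\<dots> \<le> 1" using assms(2)[OF z] by (simp add: power_le_one)
    finally show "cmod (q z ^ k) \<le> 1" .
  qed
  then show ?case by simp
qed

lemma capprox_sum:
  assumes "\<And>k. k \<in> A \<Longrightarrow> capprox E (f k)"
  shows "capprox E (\<lambda>z. \<Sum>k\<in>A. f k z)"
  using assms
proof (induction A rule: infinite_finite_induct)
  case (infinite A)
  then show ?case using capprox_const[of E 0] by simp
next
  case empty
  then show ?case using capprox_const[of E 0] by simp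
next
  case (insert x F)
  then have "capprox E (\<lambda>z. f x z + (\<Sum>k\<in>F. f k z))"
    by (intro capprox_add) auto
  then show ?case using insert by simp
qed

lemma capprox_geom:
  assumes "capprox E q" "\<And>z. z \<in> E \<Longrightarrow> cmod (q z) \<le> 1/2"
  shows "capprox E (\<lambda>z. 1 / (1 - q z))"
proof (rule capprox_limit)
  fix e :: real assume e: "e > 0"
  obtain m :: nat where m: "(1/2) ^ m < e / 2"
    using real_arch_pow_inv[of "e/2" "1/2::real"] e by auto
  have q1: "cmod (q z) \<le> 1" if "z \<in> E" for z using assms(2)[OF that] by simp
  have "capprox E (\<lambda>z. \<Sum>k\<in>{..<m}. q z ^ k)"
    by (rule capprox_sum) (rule capprox_power[OF assms(1) q1])
  moreover have "cmod (1 / (1 - q z) - (\<Sum>k\<in>{..<m}. q z ^ k)) < e" if z: "z \<in> E" for z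
  proof -
    have qz: "cmod (q z) \<le> 1/2" using assms(2)[OF z] .
    have ne: "q z \<noteq> 1" using qz by auto
    have d: "cmod (1 - q z) \<ge> 1/2"
    proof -
      have "1 \<le> cmod (1 - q z) + cmod (q z)"
        using norm_triangle_ineq[of "1 - q z" "q z"] by simp
      then show ?thesis using qz by linarith
    qed
    have "(\<Sum>k\<in>{..<m}. q z ^ k) = (1 - q z ^ m) / (1 - q z)"
      using ne by (simp add: sum_gp_strict)
    then have "1 / (1 - q z) - (\<Sum>k\<in>{..<m}. q z ^ k) = q z ^ m / (1 - q z)"
      using ne by (simp add: field_simps)
    then have "cmod (1 / (1 - q z) - (\<Sum>k\<in>{..<m}. q z ^ k)) = cmod (q z) ^ m / cmod (1 - q z)"
      by (simp add: norm_divide norm_power)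
    also have "\<dots> \<le> (1/2) ^ m / (1/2)"
      using qz d by (intro frac_le power_mono) auto
    also have "\<dots> < e" using m by simp
    finally show ?thesis .
  qed
  ultimately show "\<exists>g. capprox E g \<and> (\<forall>z\<in>E. cmod (1 / (1 - q z) - g z) < e)"
    by blast
qed


lemma capprox_cong:
  assumes "capprox E f" "\<And>z. z \<in> E \<Longrightarrow> f z = g z"
  shows "capprox E g"
  using assms unfolding capprox_def by (metis (no_types, lifting))

lemma capprox_inverse:
  assumes g: "capprox E g" and B: "\<And>z. z \<in> E \<Longrightarrow> cmod (g z) \<le> B"
    and m: "m > 0" "\<And>z. z \<in> E \<Longrightarrow> m \<le> \<bar>Re (g z)\<bar>"
  shows "capprox E (\<lambda>z. 1 / g z)"
proof -
  define C where "C t \<longleftrightarrow> capprox E (\<lambda>z. 1 / (g z - \<i> * of_real t))" for t :: real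
  have gm: "m \<le> cmod (g z - \<i> * of_real t)" if "z \<in> E" for z t
  proof -
    have "m \<le> \<bar>Re (g z - \<i> * of_real t)\<bar>" using m(2)[OF that] by simp
    also have "\<dots> \<le> cmod (g z - \<i> * of_real t)" by (rule abs_Re_le_cmod)
    finally show ?thesis .
  qed
  have base: "C t" if t: "\<bar>t\<bar> \<ge> 2 * \<bar>B\<bar> + 1" for t
  proof -
    have t0: "t \<noteq> 0" using t by auto
    define q where "q z = (1 / (\<i> * of_real t)) * g z" for z
    have "capprox E q" unfolding q_def by (rule capprox_cmult[OF g])
    moreover have "cmod (q z) \<le> 1/2" if z: "z \<in> E" for z
    proof -
      have "cmod (q z) = cmod (g z) / \<bar>t\<bar>" by (simp add: q_def norm_divide norm_mult)
      also have "\<dots> \<le> \<bar>B\<bar> / \<bar>t\<bar>" using B[OF z] t0 by (intro divide_right_mono) auto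
      also have "\<dots> \<le> 1/2" using t t0 by (simp add: field_simps)
      finally show ?thesis .
    qed
    ultimately have "capprox E (\<lambda>z. 1 / (1 - q z))" by (rule capprox_geom)
    then have "capprox E (\<lambda>z. (- 1 / (\<i> * of_real t)) * (1 / (1 - q z)))" by (rule capprox_cmult)
    moreover have "(- 1 / (\<i> * of_real t)) * (1 / (1 - q z)) = 1 / (g z - \<i> * of_real t)" if z: "z \<in> E" for z
    proof -
      have ne: "g z - \<i> * of_real t \<noteq> 0" using gm[OF z, of t] m(1) by auto
      have "1 - q z = (g z - \<i> * of_real t) / (- \<i> * of_real t)"
        using t0 by (simp add: q_def field_simps)
      then show ?thesis using t0 ne by (simp add: field_simps)
    qed
    ultimately show ?thesis unfolding C_def by (rule capprox_cong)
  qed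
  have step: "C t" if Ct': "C t'" and tt: "\<bar>t - t'\<bar> \<le> m / 2" for t t'
  proof -
    define q where "q z = (\<i> * of_real (t - t')) * (1 / (g z - \<i> * of_real t'))" for z
    have cq: "capprox E q" unfolding q_def using Ct' unfolding C_def by (rule capprox_cmult)
    have qb: "cmod (q z) \<le> 1/2" if z: "z \<in> E" for z
    proof -
      have "cmod (q z) = \<bar>t - t'\<bar> / cmod (g z - \<i> * of_real t')"
        by (simp add: q_def norm_divide norm_mult del: of_real_diff)
      also have "\<dots> \<le> (m/2) / m"
        using gm[OF z, of t'] m(1) tt by (intro frac_le) auto
      also have "\<dots> = 1/2" using m(1) by simp
      finally show ?thesis .
    qed
    have c2: "capprox E (\<lambda>z. 1 / (1 - q z))" by (rule capprox_geom[OF cq qb])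
    have "capprox E (\<lambda>z. (1 / (g z - \<i> * of_real t')) * (1 / (1 - q z)))"
    proof (rule capprox_mult[where B = "max (1/m) 2"])
      show "capprox E (\<lambda>z. 1 / (g z - \<i> * of_real t'))" using Ct' unfolding C_def .
      show "capprox E (\<lambda>z. 1 / (1 - q z))" by (rule c2)
      fix z assume z: "z \<in> E"
      have "cmod (1 / (g z - \<i> * of_real t')) \<le> 1 / m"
        using gm[OF z, of t'] m(1) by (simp add: norm_divide divide_simps)
      then show "cmod (1 / (g z - \<i> * of_real t')) \<le> max (1/m) 2" by linarith
      have d: "cmod (1 - q z) \<ge> 1/2"
      proof -
        have "1 \<le> cmod (1 - q z) + cmod (q z)"
          using norm_triangle_ineq[of "1 - q z" "q z"] by simp
        then show ?thesis using qb[OF z] by linarith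
      qed
      have "cmod (1 / (1 - q z)) \<le> 2"
        using d by (simp add: norm_divide divide_simps)
      then show "cmod (1 / (1 - q z)) \<le> max (1/m) 2" by linarith
    qed
    moreover have "(1 / (g z - \<i> * of_real t')) * (1 / (1 - q z)) = 1 / (g z - \<i> * of_real t)"
      if z: "z \<in> E" for z
    proof -
      have ne: "g z - \<i> * of_real t' \<noteq> 0" using gm[OF z, of t'] m(1) by auto
      have "(g z - \<i> * of_real t') * (1 - q z) = g z - \<i> * of_real t"
        using ne by (simp add: q_def field_simps)
      then show ?thesis by (simp add: divide_divide_eq_left mult.commute)
    qed
    ultimately show ?thesis unfolding C_def by (rule capprox_cong)
  qed
  have ind: "\<forall>t. \<bar>t\<bar> \<ge> 2 * \<bar>B\<bar> + 1 - real k * (m/2) \<longrightarrow> C t" for k :: nat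
  proof (induction k)
    case 0
    then show ?case using base by simp
  next
    case (Suc k)
    show ?case
    proof (intro allI impI)
      fix t :: real assume t: "\<bar>t\<bar> \<ge> 2 * \<bar>B\<bar> + 1 - real (Suc k) * (m/2)"
      show "C t"
      proof (cases "\<bar>t\<bar> \<ge> 2 * \<bar>B\<bar> + 1 - real k * (m/2)")
        case True
        then show ?thesis using Suc.IH by blast
      next
        case False
        define t' where "t' = (if t \<ge> 0 then t + m/2 else t - m/2)"
        have "\<bar>t'\<bar> = \<bar>t\<bar> + m/2" using m(1) by (auto simp: t'_def)
        moreover have "\<bar>t'\<bar> \<ge> 2 * \<bar>B\<bar> + 1 - real k * (m/2)" using calculation t by (simp add: algebra_simps add_divide_distrib)
        ultimately have "C t'" using Suc.IH by blast
        moreover have "\<bar>t - t'\<bar> \<le> m/2" using m(1) by (auto simp: t'_def)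
        ultimately show ?thesis by (rule step)
      qed
    qed
  qed
  obtain k :: nat where k: "2 * \<bar>B\<bar> + 1 < real k * (m/2)"
  proof -
    obtain n :: nat where "2 * \<bar>B\<bar> + 1 < real n * (m/2)"
      using reals_Archimedean3[of "m/2"] m(1) by (meson half_gt_zero)
    then show ?thesis using that by blast
  qed
  have "C 0" using ind[of k] k by auto
  then show ?thesis unfolding C_def by simp
qed


fun zeta :: "nat \<Rightarrow> complex \<Rightarrow> complex" where
  "zeta 0 z = z"
| "zeta (Suc k) z = (zeta k z + 1 / zeta k z) / 2"

lemma Re_inv_cmod: "Re (1 / w) = Re w / (cmod w)^2"
  by (simp add: Re_divide cmod_power2)

lemma zeta_re_step: "Re ((w + 1 / w) / 2) = Re w * (1 + 1 / (cmod w)^2) / 2"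
  by (simp add: Re_inv_cmod field_simps)

lemma zeta_re:
  assumes "0 < s * Re z"
  shows "s * Re (zeta k z) \<ge> s * Re z / 2 ^ k"
proof (induction k)
  case 0
  then show ?case by simp
next
  case (Suc k)
  have pos: "s * Re (zeta k z) \<ge> 0"
    using Suc.IH assms by (smt (verit) divide_pos_pos zero_less_power)
  have h: "Re (zeta (Suc k) z) = Re (zeta k z) * (1 + 1 / (cmod (zeta k z))^2) / 2"
    by (simp only: zeta.simps zeta_re_step)
  have "s * Re (zeta (Suc k) z) = (s * Re (zeta k z)) * (1 + 1 / (cmod (zeta k z))^2) / 2"
    unfolding h by (metis mult.assoc times_divide_eq_right)
  also have "\<dots> \<ge> (s * Re (zeta k z)) * 1 / 2"
    using pos by (intro divide_right_mono mult_left_mono) auto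
  finally have "s * Re (zeta (Suc k) z) \<ge> s * Re (zeta k z) / 2" by simp
  moreover have "s * Re (zeta k z) / 2 \<ge> s * Re z / 2 ^ Suc k"
    using Suc.IH by (simp add: field_simps)
  ultimately show ?case by linarith
qed

lemma zeta_abs_re:
  assumes "1 \<le> \<bar>Re z\<bar>"
  shows "\<bar>Re (zeta k z)\<bar> \<ge> 1 / 2 ^ k"
proof (cases "Re z > 0")
  case True
  have "1 * Re (zeta k z) \<ge> 1 * Re z / 2 ^ k" using True by (intro zeta_re) auto
  moreover have "Re z / 2 ^ k \<ge> 1 / 2 ^ k" using True assms by (intro divide_right_mono) auto
  ultimately show ?thesis by simp
next
  case False
  then have neg: "Re z < 0" using assms by auto
  have "(-1) * Re (zeta k z) \<ge> (-1) * Re z / 2 ^ k" using neg by (intro zeta_re) auto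
  moreover have "- Re z / 2 ^ k \<ge> 1 / 2 ^ k" using neg assms by (intro divide_right_mono) auto
  ultimately show ?thesis by simp
qed

lemma zeta_bounded:
  "\<exists>B. \<forall>z. 1 \<le> \<bar>Re z\<bar> \<and> cmod z \<le> K \<longrightarrow> cmod (zeta k z) \<le> B"
proof (induction k)
  case 0
  then show ?case by auto
next
  case (Suc k)
  then obtain B where B: "\<And>z. 1 \<le> \<bar>Re z\<bar> \<and> cmod z \<le> K \<Longrightarrow> cmod (zeta k z) \<le> B" by blast
  show ?case
  proof (intro exI[of _ "(B + 2^k) / 2"] allI impI)
    fix z assume z: "1 \<le> \<bar>Re z\<bar> \<and> cmod z \<le> K"
    have r: "\<bar>Re (zeta k z)\<bar> \<ge> 1 / 2 ^ k" using z zeta_abs_re by blast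
    have c: "cmod (zeta k z) \<ge> 1 / 2 ^ k" using r abs_Re_le_cmod order_trans by blast
    have cpos: "cmod (zeta k z) > 0" using c by (smt (verit) divide_pos_pos zero_less_power)
    have ic: "1 / cmod (zeta k z) \<le> 2 ^ k"
      using c cpos by (simp add: field_simps)
    have "cmod (zeta (Suc k) z) = cmod (zeta k z + 1 / zeta k z) / 2" by (simp add: norm_divide)
    also have "\<dots> \<le> (cmod (zeta k z) + cmod (1 / zeta k z)) / 2"
      by (intro divide_right_mono norm_triangle_ineq) auto
    also have "\<dots> \<le> (B + 2 ^ k) / 2"
      using B[OF z] ic by (intro divide_right_mono add_mono) (auto simp: norm_divide)
    finally show "cmod (zeta (Suc k) z) \<le> (B + 2 ^ k) / 2" .
  qed
qed

lemma capprox_zeta: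
  "capprox {z. 1 \<le> \<bar>Re z\<bar> \<and> cmod z \<le> K} (zeta k)"
proof (induction k)
  case 0
  show ?case by (rule capprox_cong[OF capprox_id]) simp
next
  case (Suc k)
  let ?E = "{z. 1 \<le> \<bar>Re z\<bar> \<and> cmod z \<le> K}"
  obtain B where B: "\<And>z. 1 \<le> \<bar>Re z\<bar> \<and> cmod z \<le> K \<Longrightarrow> cmod (zeta k z) \<le> B"
    using zeta_bounded[of K k] by blast
  have "capprox ?E (\<lambda>z. 1 / zeta k z)"
    by (rule capprox_inverse[OF Suc.IH, of B "1 / 2 ^ k"]) (use B zeta_abs_re in auto)
  then have "capprox ?E (\<lambda>z. zeta k z + 1 / zeta k z)"
    using Suc.IH by (intro capprox_add) auto
  then have "capprox ?E (\<lambda>z. (1/2) * (zeta k z + 1 / zeta k z))"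
    by (rule capprox_cmult)
  then show ?case by (rule capprox_cong) simp
qed

lemma sq_aux1:
  fixes w c :: complex
  assumes "w \<noteq> 0" "c * c = 1"
  shows "(w + 1 / w) / 2 - c = (w - c)^2 / (2 * w)"
proof -
  have a: "(w - c)^2 = w*w - 2*c*w + 1" using assms(2) by (simp add: power2_eq_square algebra_simps)
  have b: "(w + 1 / w) / 2 - c = (w*w + 1 - 2*c*w) / (2 * w)" using assms(1) by (simp add: field_simps)
  show ?thesis unfolding a b by (simp add: algebra_simps)
qed

lemma sq_aux2:
  fixes w c :: complex
  assumes "w \<noteq> 0" "c * c = 1"
  shows "(w + 1 / w) / 2 + c = (w + c)^2 / (2 * w)"
  using sq_aux1[OF assms(1), of "-c"] assms(2) by simp

lemma sq_aux3:
  fixes w c :: complex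
  assumes "w \<noteq> 0" "c * c = 1" "w + c \<noteq> 0"
  shows "((w + 1 / w) / 2 - c) / ((w + 1 / w) / 2 + c) = ((w - c) / (w + c))^2"
  unfolding sq_aux1[OF assms(1,2)] sq_aux2[OF assms(1,2)]
  using assms by (simp add: power_divide)

lemma zeta_w:
  assumes z: "1 \<le> \<bar>Re z\<bar>" and s: "s = (if Re z > 0 then 1 else -1 :: real)"
  shows "cmod ((zeta k z - s) / (zeta k z + s)) = cmod ((z - s) / (z + s)) ^ (2 ^ k)"
proof (induction k)
  case 0
  then show ?case by simp
next
  case (Suc k)
  let ?w = "zeta k z"
  have sR: "s * Re ?w > 0"
  proof -
    have "s * Re z > 0" using z s by (auto split: if_splits)
    then have "s * Re ?w \<ge> s * Re z / 2 ^ k" by (rule zeta_re)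
    moreover have "s * Re z / 2 ^ k > 0" using \<open>s * Re z > 0\<close> by simp
    ultimately show ?thesis by linarith
  qed
  have s2: "s * s = 1" using s by auto
  have w0: "?w \<noteq> 0" using sR by auto
  have ws: "?w + of_real s \<noteq> 0"
  proof
    assume "?w + of_real s = 0"
    then have "Re (?w + of_real s) = 0" by simp
    then have "Re ?w = - s" by simp
    then show False using sR s2 by simp
  qed
  have s2': "of_real s * of_real s = (1::complex)" using s2 by (metis of_real_1 of_real_mult)
  have "(zeta (Suc k) z - s) / (zeta (Suc k) z + s) = ((?w - s) / (?w + s))^2"
    using sq_aux3[OF w0 s2' ws] by simp
  then have "cmod ((zeta (Suc k) z - s) / (zeta (Suc k) z + s)) = cmod ((?w - s) / (?w + s))^2"
    by (simp add: norm_power)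
  also have "\<dots> = (cmod ((z - s) / (z + s)) ^ (2 ^ k))^2" using Suc.IH by simp
  also have "\<dots> = cmod ((z - s) / (z + s)) ^ (2 ^ Suc k)"
    by (simp add: power_mult[symmetric] mult.commute)
  finally show ?case .
qed


lemma w0_bound:
  assumes z: "1 \<le> \<bar>Re z\<bar>" "cmod z \<le> K" and s: "s = (if Re z > 0 then 1 else -1 :: real)"
  shows "cmod ((z - s) / (z + s)) ^ 2 \<le> 1 - 4 / (K + 1)^2"
proof -
  have sR: "s * Re z \<ge> 1" using z s by (auto split: if_splits)
  have K: "K \<ge> 1" using z abs_Re_le_cmod[of z] by linarith
  have s2: "s * s = 1" using s by auto
  have A: "cmod (z + s) ^ 2 = cmod (z - s) ^ 2 + 4 * (s * Re z)"
  proof -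
    have a: "cmod (z + s) ^ 2 = (Re z + s)^2 + (Im z)^2" by (simp add: cmod_power2)
    have b: "cmod (z - s) ^ 2 = (Re z - s)^2 + (Im z)^2" by (simp add: cmod_power2)
    show ?thesis unfolding a b by (simp add: power2_eq_square algebra_simps)
  qed
  have pos: "cmod (z + s) ^ 2 > 0" using A sR by (smt (verit) zero_le_power2)
  have B: "cmod (z + s) \<le> K + 1"
  proof -
    have "cmod (z + s) \<le> cmod z + cmod (of_real s :: complex)" by (rule norm_triangle_ineq)
    also have "cmod (of_real s :: complex) = 1" using s by auto
    finally show ?thesis using z by linarith
  qed
  have B2: "cmod (z + s) ^ 2 \<le> (K + 1) ^ 2"
    using B by (intro power_mono) auto
  have "cmod ((z - s) / (z + s)) ^ 2 = cmod (z - s) ^ 2 / cmod (z + s) ^ 2"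
    by (simp add: norm_divide power_divide)
  also have "\<dots> = 1 - 4 * (s * Re z) / cmod (z + s) ^ 2"
    using pos A by (simp add: field_simps)
  also have "\<dots> \<le> 1 - 4 / (K + 1) ^ 2"
  proof -
    have "4 / (K + 1) ^ 2 \<le> 4 / cmod (z + s) ^ 2"
      using pos B2 K by (intro divide_left_mono) (auto intro!: mult_pos_pos)
    also have "\<dots> \<le> 4 * (s * Re z) / cmod (z + s) ^ 2"
      using pos sR by (intro divide_right_mono) auto
    finally show ?thesis by linarith
  qed
  finally show ?thesis .
qed

lemma zeta_conv:
  assumes K: "K \<ge> 1" and e: "e > 0"
  shows "\<exists>k. \<forall>z. 1 \<le> \<bar>Re z\<bar> \<and> cmod z \<le> K \<longrightarrow>
           cmod (zeta k z - of_real (if Re z > 0 then 1 else -1)) < e"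
proof -
  define \<theta> where "\<theta> = 1 - 4 / (K + 1)^2"
  have th0: "0 \<le> \<theta>"
  proof -
    have "(2::real)^2 \<le> (K + 1)^2" using K by (intro power_mono) auto
    then have "4 / (K + 1)^2 \<le> 1" using K by (simp add: field_simps)
    then show ?thesis unfolding \<theta>_def by linarith
  qed
  have th1: "\<theta> < 1" unfolding \<theta>_def using K by (simp add: add_pos_nonneg)
  define d where "d = min (e/4) (1/2)"
  have d: "d > 0" "d \<le> e/4" "d \<le> 1/2" using e by (auto simp: d_def)
  obtain k where k: "\<theta> ^ k < d^2"
    using real_arch_pow_inv[of "d^2" \<theta>] d th1 by auto
  show ?thesis
  proof (intro exI[of _ k] allI impI)
    fix z assume z: "1 \<le> \<bar>Re z\<bar> \<and> cmod z \<le> K"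
    define s where "s = (if Re z > 0 then 1 else -1 :: real)"
    define w where "w = (zeta k z - s) / (zeta k z + s)"
    have w: "cmod w = cmod ((z - s) / (z + s)) ^ (2 ^ k)"
      unfolding w_def by (rule zeta_w) (use z s_def in auto)
    have "cmod w ^ 2 = (cmod ((z - s) / (z + s)) ^ 2) ^ (2 ^ k)"
      unfolding w by (simp add: power_mult[symmetric] mult.commute)
    also have "\<dots> \<le> \<theta> ^ (2 ^ k)"
      using w0_bound[of z K s] z s_def by (intro power_mono) (auto simp: \<theta>_def)
    also have "\<dots> \<le> \<theta> ^ k"
      using th0 th1 by (intro power_decreasing) (auto intro: less_imp_le less_exp)
    also have "\<dots> < d^2" by (rule k)
    finally have "cmod w ^ 2 < d ^ 2" .
    then have wd: "cmod w < d" using d(1) by (smt (verit) power_mono norm_ge_zero)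
    have sR: "s * Re (zeta k z) > 0"
    proof -
      have "s * Re z > 0" using z s_def by (auto split: if_splits)
      then have "s * Re (zeta k z) \<ge> s * Re z / 2 ^ k" by (rule zeta_re)
      moreover have "s * Re z / 2 ^ k > 0" using \<open>s * Re z > 0\<close> by simp
      ultimately show ?thesis by linarith
    qed
    have ws: "zeta k z + of_real s \<noteq> 0"
    proof
      assume "zeta k z + of_real s = 0"
      then have "Re (zeta k z + of_real s) = 0" by simp
      then have "Re (zeta k z) = - s" by simp
      then show False using sR s_def by (auto split: if_splits)
    qed
    have eq: "zeta k z - s = w * ((zeta k z - s) + 2 * (of_real s :: complex))"
      using ws unfolding w_def by (simp add: field_simps)
    have "cmod (zeta k z - s) \<le> cmod w * (cmod (zeta k z - s) + 2)"
    proof -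
      have "cmod (zeta k z - s) = cmod w * cmod ((zeta k z - s) + 2 * (of_real s :: complex))"
        by (subst eq) (simp add: norm_mult)
      also have "\<dots> \<le> cmod w * (cmod (zeta k z - s) + cmod (2 * of_real s :: complex))"
        by (rule mult_left_mono[OF norm_triangle_ineq]) simp
      also have "cmod (2 * of_real s :: complex) = 2" using s_def by (auto simp: norm_mult)
      finally show ?thesis .
    qed
    then have "cmod (zeta k z - s) * (1 - cmod w) \<le> 2 * cmod w" by (simp add: algebra_simps)
    moreover have "1 - cmod w \<ge> 1/2" using wd d by linarith
    ultimately have "cmod (zeta k z - s) * (1/2) \<le> 2 * cmod w"
      by (smt (verit) mult_left_mono norm_ge_zero)
    then have "cmod (zeta k z - s) \<le> 4 * cmod w" by simp
    also have "\<dots> < e" using wd d by linarith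
    finally show "cmod (zeta k z - of_real (if Re z > 0 then 1 else -1)) < e"
      unfolding s_def .
  qed
qed

lemma sign_poly:
  assumes K: "K \<ge> 1" and e: "e > 0"
  shows "\<exists>p. \<forall>z. 1 \<le> \<bar>Re z\<bar> \<and> cmod z \<le> K \<longrightarrow>
           cmod (poly p z - of_real (if Re z > 0 then 1 else -1)) < e"
proof -
  obtain k where k: "\<And>z. 1 \<le> \<bar>Re z\<bar> \<and> cmod z \<le> K \<Longrightarrow>
           cmod (zeta k z - of_real (if Re z > 0 then 1 else -1)) < e/2"
    using zeta_conv[OF K, of "e/2"] e by auto
  obtain p where p: "\<forall>z\<in>{z. 1 \<le> \<bar>Re z\<bar> \<and> cmod z \<le> K}. cmod (zeta k z - poly p z) < e/2"
    using capprox_zeta[of K k] e unfolding capprox_def by (meson half_gt_zero)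
  show ?thesis
  proof (intro exI[of _ p] allI impI)
    fix z assume z: "1 \<le> \<bar>Re z\<bar> \<and> cmod z \<le> K"
    have "cmod (poly p z - of_real (if Re z > 0 then 1 else -1))
        \<le> cmod (zeta k z - poly p z) + cmod (zeta k z - of_real (if Re z > 0 then 1 else -1))"
      using norm_triangle_ineq[of "poly p z - zeta k z" "zeta k z - of_real (if Re z > 0 then 1 else -1)"]
      by (simp add: norm_minus_commute)
    also have "\<dots> < e" using k[OF z] p z by fastforce
    finally show "cmod (poly p z - of_real (if Re z > 0 then 1 else -1)) < e" .
  qed
qed


lemma harmonic_const: "harmonic (\<lambda>x. c)"
  unfolding harmonic_def
  by (rule exI[of _ "\<lambda>x. 0"], rule exI[of _ "\<lambda>x. 0"]) (auto simp: zero_blinfun.rep_eq intro: has_derivative_const)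

lemma harmonic_add:
  assumes "harmonic f" "harmonic g"
  shows "harmonic (\<lambda>x. f x + g x)"
proof -
  obtain f' f'' where f: "\<forall>x. (f has_derivative blinfun_apply (f' x)) (at x)"
      "\<forall>x. (f' has_derivative blinfun_apply (f'' x)) (at x)" "continuous_on UNIV f''"
      "\<forall>x. (\<Sum>i\<in>UNIV. blinfun_apply (blinfun_apply (f'' x) (axis i 1)) (axis i 1)) = 0"
    using assms(1) unfolding harmonic_def by blast
  obtain g' g'' where g: "\<forall>x. (g has_derivative blinfun_apply (g' x)) (at x)"
      "\<forall>x. (g' has_derivative blinfun_apply (g'' x)) (at x)" "continuous_on UNIV g''"
      "\<forall>x. (\<Sum>i\<in>UNIV. blinfun_apply (blinfun_apply (g'' x) (axis i 1)) (axis i 1)) = 0"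
    using assms(2) unfolding harmonic_def by blast
  show ?thesis
    unfolding harmonic_def
  proof (intro exI[of _ "\<lambda>x. f' x + g' x"] exI[of _ "\<lambda>x. f'' x + g'' x"] conjI allI)
    fix x
    show "((\<lambda>x. f x + g x) has_derivative blinfun_apply (f' x + g' x)) (at x)"
      using has_derivative_add[OF f(1)[rule_format, of x] g(1)[rule_format, of x]]
      by (simp add: plus_blinfun.rep_eq)
    show "((\<lambda>x. f' x + g' x) has_derivative blinfun_apply (f'' x + g'' x)) (at x)"
      using has_derivative_add[OF f(2)[rule_format, of x] g(2)[rule_format, of x]]
      by (simp add: plus_blinfun.rep_eq)
    show "continuous_on UNIV (\<lambda>x. f'' x + g'' x)"
      using f(3) g(3) by (intro continuous_intros)
    show "(\<Sum>i\<in>UNIV. blinfun_apply (blinfun_apply (f'' x + g'' x) (axis i 1)) (axis i 1)) = 0"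
      using f(4) g(4) by (simp add: plus_blinfun.rep_eq sum.distrib)
  qed
qed

lemma harmonic_ridge:
  fixes a b :: "real^'n" and p :: "complex poly"
  assumes ab: "a \<bullet> b = 0" "norm a = norm b"
  shows "harmonic (\<lambda>x. Re (poly p (of_real (a \<bullet> x) + \<i> * of_real (b \<bullet> x))))"
proof -
  define Z where "Z x = of_real (a \<bullet> x) + \<i> * of_real (b \<bullet> x)" for x :: "real^'n"
  have bo: "bounded_linear (\<lambda>x. complex_of_real (c \<bullet> x))" for c :: "real^'n"
    by (rule bounded_linear_compose[OF bounded_linear_of_real bounded_linear_inner_right])
  have blZ: "bounded_linear Z" unfolding Z_def
    by (intro bounded_linear_add bo bounded_linear_compose[OF bounded_linear_mult_right bo])
  have dZ: "(Z has_derivative Z) (at x)" for x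
    by (rule bounded_linear_imp_has_derivative[OF blZ])
  define p1 where "p1 = pderiv p"
  define p2 where "p2 = pderiv p1"
  have dP: "((\<lambda>x. poly q (Z x)) has_derivative (\<lambda>h. poly (pderiv q) (Z x) * Z h)) (at x)" for q x
  proof -
    have "(poly q has_derivative (\<lambda>h. poly (pderiv q) (Z x) * h)) (at (Z x))"
      using poly_DERIV[of q "Z x"] unfolding has_field_derivative_def .
    from has_derivative_compose[OF dZ this] show ?thesis .
  qed
  define A where "A = blinfun_inner_right a"
  define B where "B = blinfun_inner_right b"
  define M1 :: "(real^'n) \<Rightarrow>\<^sub>L ((real^'n) \<Rightarrow>\<^sub>L real)"
    where "M1 = Blinfun (\<lambda>h. (a \<bullet> h) *\<^sub>R A - (b \<bullet> h) *\<^sub>R B)"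
  define M2 :: "(real^'n) \<Rightarrow>\<^sub>L ((real^'n) \<Rightarrow>\<^sub>L real)"
    where "M2 = Blinfun (\<lambda>h. (b \<bullet> h) *\<^sub>R A + (a \<bullet> h) *\<^sub>R B)"
  have M1: "blinfun_apply M1 h = (a \<bullet> h) *\<^sub>R A - (b \<bullet> h) *\<^sub>R B" for h
    unfolding M1_def by (subst bounded_linear_Blinfun_apply) (auto intro!: bounded_linear_intros)
  have M2: "blinfun_apply M2 h = (b \<bullet> h) *\<^sub>R A + (a \<bullet> h) *\<^sub>R B" for h
    unfolding M2_def by (subst bounded_linear_Blinfun_apply) (auto intro!: bounded_linear_intros)
  define u' where "u' x = Re (poly p1 (Z x)) *\<^sub>R A - Im (poly p1 (Z x)) *\<^sub>R B" for x
  define u'' where "u'' x = Re (poly p2 (Z x)) *\<^sub>R M1 - Im (poly p2 (Z x)) *\<^sub>R M2" for x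
  show ?thesis
    unfolding harmonic_def Z_def[symmetric]
  proof (intro exI[of _ u'] exI[of _ u''] conjI allI)
    fix x
    have "((\<lambda>x. Re (poly p (Z x))) has_derivative (\<lambda>h. Re (poly p1 (Z x) * Z h))) (at x)"
      unfolding p1_def by (rule has_derivative_Re[OF dP])
    moreover have "(\<lambda>h. Re (poly p1 (Z x) * Z h)) = blinfun_apply (u' x)"
      by (rule ext) (simp add: u'_def A_def B_def Z_def blinfun.diff_left blinfun.scaleR_left)
    ultimately show "((\<lambda>x. Re (poly p (Z x))) has_derivative blinfun_apply (u' x)) (at x)" by simp
  next
    fix x
    have d1: "((\<lambda>x. Re (poly p1 (Z x))) has_derivative (\<lambda>h. Re (poly p2 (Z x) * Z h))) (at x)"
      unfolding p2_def by (rule has_derivative_Re[OF dP])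
    have d2: "((\<lambda>x. Im (poly p1 (Z x))) has_derivative (\<lambda>h. Im (poly p2 (Z x) * Z h))) (at x)"
      unfolding p2_def by (rule has_derivative_Im[OF dP])
    have "(u' has_derivative (\<lambda>h. Re (poly p2 (Z x) * Z h) *\<^sub>R A - Im (poly p2 (Z x) * Z h) *\<^sub>R B)) (at x)"
      unfolding u'_def
      by (rule has_derivative_diff[OF has_derivative_scaleR_left[OF d1] has_derivative_scaleR_left[OF d2]])
    moreover have "(\<lambda>h. Re (poly p2 (Z x) * Z h) *\<^sub>R A - Im (poly p2 (Z x) * Z h) *\<^sub>R B) = blinfun_apply (u'' x)"
    proof (rule ext, rule blinfun_eqI)
      fix h i
      show "blinfun_apply (Re (poly p2 (Z x) * Z h) *\<^sub>R A - Im (poly p2 (Z x) * Z h) *\<^sub>R B) i =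
            blinfun_apply (blinfun_apply (u'' x) h) i"
        by (simp add: u''_def M1 M2 Z_def blinfun.diff_left blinfun.scaleR_left blinfun.add_left algebra_simps)
    qed
    ultimately show "(u' has_derivative blinfun_apply (u'' x)) (at x)" by simp
  next
    have cZ: "continuous_on UNIV Z" using blZ by (rule linear_continuous_on)
    show "continuous_on UNIV u''" unfolding u''_def
      by (intro continuous_intros cZ)
  next
    fix x
    let ?c = "poly p2 (Z x)"
    have "(\<Sum>i\<in>UNIV. blinfun_apply (blinfun_apply (u'' x) (axis i 1)) (axis i 1))
        = (\<Sum>i\<in>UNIV. Re ?c * (a $ i * a $ i - b $ i * b $ i) - Im ?c * (b $ i * a $ i + a $ i * b $ i))"
      by (intro sum.cong refl) (simp add: u''_def M1 M2 A_def B_def blinfun.diff_left blinfun.scaleR_left blinfun.add_left inner_axis algebra_simps)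
    also have "\<dots> = Re ?c * ((\<Sum>i\<in>UNIV. a $ i * a $ i) - (\<Sum>i\<in>UNIV. b $ i * b $ i))
                    - Im ?c * (2 * (\<Sum>i\<in>UNIV. a $ i * b $ i))"
      by (simp add: sum_subtractf sum.distrib sum_distrib_left algebra_simps)
    also have "\<dots> = Re ?c * (a \<bullet> a - b \<bullet> b) - Im ?c * (2 * (a \<bullet> b))"
      by (simp add: inner_vec_def)
    also have "\<dots> = 0" using ab by (simp add: power2_norm_eq_inner[symmetric])
    finally show "(\<Sum>i\<in>UNIV. blinfun_apply (blinfun_apply (u'' x) (axis i 1)) (axis i 1)) = 0" .
  qed
qed


lemma cos_lip: "\<bar>cos x - cos y\<bar> \<le> \<bar>x - y\<bar>" for x y :: real
proof -
  have "\<bar>cos x - cos y\<bar> = 2 * \<bar>sin ((x + y) / 2)\<bar> * \<bar>sin ((y - x) / 2)\<bar>"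
    by (simp add: cos_diff_cos abs_mult)
  also have "\<dots> \<le> 2 * 1 * \<bar>(y - x) / 2\<bar>"
    by (intro mult_mono abs_sin_x_le_abs_x) auto
  also have "\<dots> = \<bar>x - y\<bar>" by simp
  finally show ?thesis .
qed

lemma step_approx:
  fixes g :: "real \<Rightarrow> real"
  assumes eta: "\<eta> > 0" and lip: "\<And>s s'. \<bar>g s - g s'\<bar> \<le> L * \<bar>s - s'\<bar>" and L: "L \<ge> 0"
    and s: "\<alpha> \<le> s" "s \<le> \<alpha> + real m * \<eta>"
  shows "\<bar>g \<alpha> + (\<Sum>j<m. if \<alpha> + real (Suc j) * \<eta> \<le> s
            then g (\<alpha> + real (Suc j) * \<eta>) - g (\<alpha> + real j * \<eta>) else 0) - g s\<bar> \<le> L * \<eta>"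
proof -
  define f where "f j = g (\<alpha> + real j * \<eta>)" for j
  define k where "k = nat \<lfloor>(s - \<alpha>) / \<eta>\<rfloor>"
  have q0: "(s - \<alpha>) / \<eta> \<ge> 0" using s eta by simp
  have kf: "real k \<le> (s - \<alpha>) / \<eta>" "(s - \<alpha>) / \<eta> < real k + 1"
    using q0 unfolding k_def by (auto simp: of_nat_nat)
  have km: "k \<le> m"
  proof -
    have "(s - \<alpha>) / \<eta> \<le> real m" using s eta by (simp add: field_simps)
    then show ?thesis using kf by linarith
  qed
  have cond: "(\<alpha> + real (Suc j) * \<eta> \<le> s) \<longleftrightarrow> j < k" for j
  proof -
    have "(\<alpha> + real (Suc j) * \<eta> \<le> s) \<longleftrightarrow> real (Suc j) \<le> (s - \<alpha>) / \<eta>"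
      using eta by (simp add: field_simps)
    also have "\<dots> \<longleftrightarrow> real (Suc j) < real k + 1"
    proof
      assume "real (Suc j) \<le> (s - \<alpha>) / \<eta>" then show "real (Suc j) < real k + 1" using kf(2) by linarith
    next
      assume a: "real (Suc j) < real k + 1"
      have "real (Suc j) < real k + 1 \<longleftrightarrow> j < k" by simp
      then have "real (Suc j) \<le> real k" using a by simp
      then show "real (Suc j) \<le> (s - \<alpha>) / \<eta>" using kf(1) by linarith
    qed
    also have "\<dots> \<longleftrightarrow> j < k" by simp
    finally show ?thesis .
  qed
  have "(\<Sum>j<m. if \<alpha> + real (Suc j) * \<eta> \<le> s
            then g (\<alpha> + real (Suc j) * \<eta>) - g (\<alpha> + real j * \<eta>) else 0)
        = (\<Sum>j<m. if j < k then f (Suc j) - f j else 0)"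
    by (intro sum.cong refl) (simp only: cond f_def)
  also have "\<dots> = (\<Sum>j\<in>{j\<in>{..<m}. j < k}. f (Suc j) - f j)"
    using sum.inter_filter[of "{..<m}" "\<lambda>j. f (Suc j) - f j" "\<lambda>j. j < k"] by simp
  also have "{j\<in>{..<m}. j < k} = {..<k}" using km by auto
  also have "(\<Sum>j<k. f (Suc j) - f j) = f k - f 0" by (rule sum_lessThan_telescope)
  finally have sum: "g \<alpha> + (\<Sum>j<m. if \<alpha> + real (Suc j) * \<eta> \<le> s
            then g (\<alpha> + real (Suc j) * \<eta>) - g (\<alpha> + real j * \<eta>) else 0) = f k"
    by (simp add: f_def)
  have "\<bar>f k - g s\<bar> \<le> L * \<bar>(\<alpha> + real k * \<eta>) - s\<bar>" unfolding f_def by (rule lip)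
  also have "\<bar>(\<alpha> + real k * \<eta>) - s\<bar> \<le> \<eta>"
  proof -
    have "real k * \<eta> \<le> s - \<alpha>" using kf(1) eta by (simp add: field_simps)
    moreover have "s - \<alpha> < (real k + 1) * \<eta>" using kf(2) eta by (simp add: field_simps)
    ultimately show ?thesis by (simp add: algebra_simps)
  qed
  then have "L * \<bar>(\<alpha> + real k * \<eta>) - s\<bar> \<le> L * \<eta>" using L by (rule mult_left_mono)
  finally show ?thesis unfolding sum .
qed

lemma heavi_poly:
  assumes d: "\<delta> > 0" and e: "e > 0"
  shows "\<exists>q. \<forall>z. cmod z \<le> Kz \<and> \<delta> \<le> \<bar>Re z - \<tau>\<bar> \<longrightarrow>
           cmod (poly q z - (if \<tau> \<le> Re z then 1 else 0)) < e"
proof -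
  define K' where "K' = (\<bar>Kz\<bar> + \<bar>\<tau>\<bar>) / \<delta> + 1"
  have K': "K' \<ge> 1" using d by (simp add: K'_def)
  obtain P where P: "\<And>z. 1 \<le> \<bar>Re z\<bar> \<and> cmod z \<le> K' \<Longrightarrow>
           cmod (poly P z - of_real (if Re z > 0 then 1 else -1)) < 2 * e"
    using sign_poly[OF K', of "2 * e"] e by auto
  define q where "q = smult (1/2) (1 + pcompose P [: - of_real (\<tau> / \<delta>), of_real (1 / \<delta>) :])"
  show ?thesis
  proof (intro exI[of _ q] allI impI)
    fix z assume z: "cmod z \<le> Kz \<and> \<delta> \<le> \<bar>Re z - \<tau>\<bar>"
    define w where "w = (z - of_real \<tau>) / of_real \<delta>"
    have pw: "poly [: - of_real (\<tau> / \<delta>), of_real (1 / \<delta>) :] z = w"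
      using d by (simp add: w_def field_simps)
    have Rew: "Re w = (Re z - \<tau>) / \<delta>" by (simp add: w_def Re_divide_of_real)
    have "\<bar>Re w\<bar> = \<bar>Re z - \<tau>\<bar> / \<delta>" using d by (simp add: Rew abs_divide)
    then have w1: "1 \<le> \<bar>Re w\<bar>" using z d by (simp add: le_divide_eq)
    have w2: "cmod w \<le> K'"
    proof -
      have "cmod w = cmod (z - of_real \<tau>) / \<delta>" using d by (simp add: w_def norm_divide)
      also have "\<dots> \<le> (\<bar>Kz\<bar> + \<bar>\<tau>\<bar>) / \<delta>"
      proof (intro divide_right_mono)
        have "cmod (z - of_real \<tau>) \<le> cmod z + cmod (of_real \<tau> :: complex)" by (rule norm_triangle_ineq4)
        then show "cmod (z - of_real \<tau>) \<le> \<bar>Kz\<bar> + \<bar>\<tau>\<bar>" using z abs_ge_self[of Kz] by simp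
      qed (use d in simp)
      finally show ?thesis unfolding K'_def by simp
    qed
    have "(Re w > 0) \<longleftrightarrow> (Re z - \<tau> > 0)" using d by (simp add: Rew zero_less_divide_iff)
    then have sg: "(Re w > 0) \<longleftrightarrow> (\<tau> \<le> Re z)"
      using z d by auto
    have pq: "poly q z = (1 + poly P w) / 2" unfolding q_def poly_smult poly_add poly_pcompose pw by simp
    have eqn: "poly q z - (if \<tau> \<le> Re z then 1 else 0) = (poly P w - of_real (if Re w > 0 then 1 else -1)) / 2"
    proof (cases "\<tau> \<le> Re z")
      case True
      then show ?thesis using sg pq by (simp add: field_simps)
    next
      case False
      then show ?thesis using sg pq by (simp add: field_simps)
    qed
    have "cmod (poly q z - (if \<tau> \<le> Re z then 1 else 0)) = cmod (poly P w - of_real (if Re w > 0 then 1 else -1)) / 2"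
      unfolding eqn norm_divide by simp
    also have "\<dots> < e" using P[of w] w1 w2 by simp
    finally show "cmod (poly q z - (if \<tau> \<le> Re z then 1 else 0)) < e" .
  qed
qed


lemma exists_perp:
  fixes a :: "real^'n"
  assumes n2: "CARD('n) \<ge> 2"
  shows "\<exists>b. a \<bullet> b = 0 \<and> norm b = norm a"
proof (cases "a = 0")
  case True
  then show ?thesis by (intro exI[of _ 0]) simp
next
  case False
  then obtain i where i: "a $ i \<noteq> 0" by (metis vec_eq_iff zero_index)
  obtain j where j: "j \<noteq> i"
  proof -
    have "\<exists>j. j \<noteq> i"
    proof (rule ccontr)
      assume "\<not> (\<exists>j. j \<noteq> i)"
      then have "(UNIV :: 'n set) = {i}" by auto
      then have "CARD('n) = 1" by (metis card_1_singleton_iff One_nat_def)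
      then show False using n2 by simp
    qed
    then show ?thesis using that by blast
  qed
  define b0 where "b0 = axis i (a $ j) - axis j (a $ i)"
  have ab0: "a \<bullet> b0 = 0" by (simp add: b0_def inner_diff_right inner_axis)
  have "b0 $ j = - (a $ i)" using j by (simp add: b0_def axis_def)
  then have b00: "b0 \<noteq> 0" using i by auto
  define b where "b = (norm a / norm b0) *\<^sub>R b0"
  have "a \<bullet> b = 0" by (simp add: b_def ab0)
  moreover have "norm b = norm a" using b00 by (simp add: b_def)
  ultimately show ?thesis by blast
qed

lemma slab_small:
  fixes a :: "real^'n"
  assumes a: "a \<noteq> 0" and e: "e > 0"
  shows "\<exists>K. \<forall>k\<ge>K. measure lebesgue {x\<in>cball 0 r. \<bar>a \<bullet> x - t\<bar> \<le> 1 / Suc k} < e"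
proof -
  define A where "A k = {x\<in>cball 0 r. \<bar>a \<bullet> x - t\<bar> \<le> 1 / Suc k}" for k :: nat
  have cA: "compact (A k)" for k
  proof -
    have "A k = cball 0 r \<inter> {x. \<bar>a \<bullet> x - t\<bar> \<le> 1 / Suc k}" by (auto simp: A_def)
    moreover have "closed {x. \<bar>a \<bullet> x - t\<bar> \<le> 1 / Suc k}"
      by (intro closed_Collect_le continuous_intros)
    ultimately show ?thesis by (simp add: compact_Int_closed)
  qed
  have lA: "A k \<in> lmeasurable" for k using cA by (rule lmeasurable_compact)
  have dA: "decseq A"
  proof (rule decseq_SucI)
    fix k
    have "1 / real (Suc (Suc k)) \<le> 1 / real (Suc k)" by (simp add: frac_le)
    then show "A (Suc k) \<subseteq> A k" unfolding A_def by auto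
  qed
  have "(\<lambda>k. measure lebesgue (A k)) \<longlonglongrightarrow> measure lebesgue (\<Inter>k. A k)"
  proof (rule Lim_measure_decseq)
    show "range A \<subseteq> sets lebesgue" using lA by auto
    show "decseq A" by (rule dA)
    show "emeasure lebesgue (A k) \<noteq> \<infinity>" for k using fmeasurableD2[OF lA[of k]] by simp
  qed
  moreover have "measure lebesgue (\<Inter>k. A k) = 0"
  proof -
    have "(\<Inter>k. A k) \<subseteq> {x. a \<bullet> x = t}"
    proof
      fix x assume x: "x \<in> (\<Inter>k. A k)"
      show "x \<in> {x. a \<bullet> x = t}"
      proof (rule ccontr)
        assume "x \<notin> {x. a \<bullet> x = t}"
        then have pos: "\<bar>a \<bullet> x - t\<bar> > 0" by simp
        obtain k :: nat where k: "1 / real (Suc k) < \<bar>a \<bullet> x - t\<bar>"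
          using pos by (metis inverse_eq_divide reals_Archimedean of_nat_Suc)
        have "x \<in> A k" using x by blast
        then show False using k by (simp add: A_def)
      qed
    qed
    moreover have "negligible {x. a \<bullet> x = t}" using a by (intro negligible_hyperplane) auto
    ultimately have "negligible (\<Inter>k. A k)" using negligible_subset by blast
    then show ?thesis by (rule negligible_imp_measure0)
  qed
  ultimately have "(\<lambda>k. measure lebesgue (A k)) \<longlonglongrightarrow> 0" by simp
  then obtain K where "\<forall>k\<ge>K. norm (measure lebesgue (A k) - 0) < e"
    using e unfolding LIMSEQ_iff by blast
  then show ?thesis unfolding A_def by auto
qed

lemma slabs_small:
  fixes a :: "real^'n" and \<tau> :: "nat \<Rightarrow> real"
  assumes a: "a \<noteq> 0" and e: "e > 0"
  shows "\<exists>K. \<forall>k\<ge>K. \<forall>j<m. measure lebesgue {x\<in>cball 0 r. \<bar>a \<bullet> x - \<tau> j\<bar> \<le> 1 / Suc k} < e"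
proof (induction m)
  case 0
  then show ?case by auto
next
  case (Suc m)
  then obtain K1 where K1: "\<forall>k\<ge>K1. \<forall>j<m. measure lebesgue {x\<in>cball 0 r. \<bar>a \<bullet> x - \<tau> j\<bar> \<le> 1 / Suc k} < e"
    by blast
  obtain K2 where K2: "\<forall>k\<ge>K2. measure lebesgue {x\<in>cball 0 r. \<bar>a \<bullet> x - \<tau> m\<bar> \<le> 1 / Suc k} < e"
    using slab_small[OF a e] by blast
  show ?case
  proof (intro exI[of _ "max K1 K2"] allI impI)
    fix k j assume "max K1 K2 \<le> k" "j < Suc m"
    then show "measure lebesgue {x\<in>cball 0 r. \<bar>a \<bullet> x - \<tau> j\<bar> \<le> 1 / Suc k} < e"
      using K1 K2 less_Suc_eq by auto
  qed
qed


lemma slab_compact: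
  fixes a :: "real^'n"
  shows "compact {x\<in>cball 0 r. \<bar>a \<bullet> x - t\<bar> \<le> d}"
proof -
  have "{x\<in>cball 0 r. \<bar>a \<bullet> x - t\<bar> \<le> d} = cball 0 r \<inter> {x. \<bar>a \<bullet> x - t\<bar> \<le> d}" by auto
  moreover have "closed {x. \<bar>a \<bullet> x - t\<bar> \<le> d}"
    by (intro closed_Collect_le continuous_intros)
  ultimately show ?thesis by (simp add: compact_Int_closed)
qed

lemma ridge_approx:
  fixes a :: "real^'n" and c \<phi> e r :: real
  assumes n2: "CARD('n) \<ge> 2" and e: "e > 0"
  shows "\<exists>h T. harmonic h \<and> T \<in> lmeasurable \<and> measure lebesgue T \<le> e \<and>
           (\<forall>x\<in>cball 0 r - T. \<bar>h x - c * cos (a \<bullet> x + \<phi>)\<bar> < e)"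
proof (cases "a = 0")
  case True
  show ?thesis
    by (intro exI[of _ "\<lambda>x. c * cos \<phi>"] exI[of _ "{}"]) (use e True harmonic_const in auto)
next
  case False
  obtain b where b: "a \<bullet> b = 0" "norm b = norm a" using exists_perp[OF n2] by blast
  define R where "R = norm a * \<bar>r\<bar> + 1"
  have R: "R > 0" unfolding R_def by (simp add: add_nonneg_pos)
  have sx: "\<bar>a \<bullet> x\<bar> \<le> R" "\<bar>b \<bullet> x\<bar> \<le> R" if x: "x \<in> cball 0 r" for x
  proof -
    have nx: "norm x \<le> \<bar>r\<bar>" using x by (simp add: mem_cball_0)
    have "\<bar>a \<bullet> x\<bar> \<le> norm a * norm x" by (rule Cauchy_Schwarz_ineq2)
    also have "\<dots> \<le> norm a * \<bar>r\<bar>" using nx by (simp add: mult_left_mono)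
    finally show "\<bar>a \<bullet> x\<bar> \<le> R" unfolding R_def by simp
    have "\<bar>b \<bullet> x\<bar> \<le> norm b * norm x" by (rule Cauchy_Schwarz_ineq2)
    also have "\<dots> \<le> norm a * \<bar>r\<bar>" using nx b(2) by (simp add: mult_left_mono)
    finally show "\<bar>b \<bullet> x\<bar> \<le> R" unfolding R_def by simp
  qed
  define g where "g s = c * cos (s + \<phi>)" for s
  have lip: "\<bar>g s - g s'\<bar> \<le> \<bar>c\<bar> * \<bar>s - s'\<bar>" for s s'
  proof -
    have "\<bar>g s - g s'\<bar> = \<bar>c\<bar> * \<bar>cos (s + \<phi>) - cos (s' + \<phi>)\<bar>"
      by (simp add: g_def abs_mult[symmetric] right_diff_distrib)
    also have "\<dots> \<le> \<bar>c\<bar> * \<bar>(s + \<phi>) - (s' + \<phi>)\<bar>" by (intro mult_left_mono cos_lip) auto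
    finally show ?thesis by simp
  qed
  define \<eta> where "\<eta> = e / (2 * (\<bar>c\<bar> + 1))"
  have eta: "\<eta> > 0" unfolding \<eta>_def using e by (simp add: add_nonneg_pos)
  have ceta: "\<bar>c\<bar> * \<eta> < e / 2"
  proof -
    have "\<bar>c\<bar> * \<eta> = (e / 2) * (\<bar>c\<bar> / (\<bar>c\<bar> + 1))" by (simp add: \<eta>_def field_simps)
    also have "\<dots> < (e / 2) * 1" using e by (intro mult_strict_left_mono) auto
    finally show ?thesis by simp
  qed
  define \<alpha> where "\<alpha> = - R"
  define m where "m = nat \<lceil>2 * R / \<eta>\<rceil>"
  have meta: "2 * R \<le> real m * \<eta>"
  proof -
    have "0 < 2 * R / \<eta>" using R eta by simp
    then have c0: "0 \<le> \<lceil>2 * R / \<eta>\<rceil>" by simp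
    have "real m = of_int \<lceil>2 * R / \<eta>\<rceil>" unfolding m_def using c0 by simp
    then have "2 * R / \<eta> \<le> real m" by (simp add: le_of_int_ceiling)
    then show ?thesis using eta by (simp add: field_simps)
  qed
  define \<tau> where "\<tau> j = \<alpha> + real (Suc j) * \<eta>" for j
  define \<Delta> where "\<Delta> j = g (\<alpha> + real (Suc j) * \<eta>) - g (\<alpha> + real j * \<eta>)" for j
  define SD where "SD = (\<Sum>j<m. \<bar>\<Delta> j\<bar>)"
  have SD0: "SD \<ge> 0" unfolding SD_def by (simp add: sum_nonneg)
  define e2 where "e2 = e / (2 * (SD + 1))"
  have e2: "e2 > 0" unfolding e2_def using e SD0 by simp
  have SDe2: "SD * e2 < e / 2"
  proof -
    have "SD * e2 = (e / 2) * (SD / (SD + 1))" using SD0 by (simp add: e2_def field_simps)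
    also have "\<dots> < (e / 2) * 1" using e SD0 by (intro mult_strict_left_mono) auto
    finally show ?thesis by simp
  qed
  have em: "e / (real m + 1) > 0" using e by simp
  obtain K where K: "\<forall>k\<ge>K. \<forall>j<m. measure lebesgue {x\<in>cball 0 r. \<bar>a \<bullet> x - \<tau> j\<bar> \<le> 1 / Suc k} < e / (real m + 1)"
    using slabs_small[OF False em, where r=r and \<tau>=\<tau> and m=m] by blast
  define \<delta> where "\<delta> = 1 / real (Suc K)"
  have d: "\<delta> > 0" by (simp add: \<delta>_def)
  define S where "S j = {x\<in>cball 0 r. \<bar>a \<bullet> x - \<tau> j\<bar> \<le> \<delta>}" for j
  define T where "T = (\<Union>j<m. S j)"
  have Tc: "compact T" unfolding T_def S_def by (intro compact_UN slab_compact) auto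
  have Tm: "T \<in> lmeasurable" using Tc by (rule lmeasurable_compact)
  have Tmeas: "measure lebesgue T \<le> e"
  proof -
    have "measure lebesgue T \<le> (\<Sum>j<m. measure lebesgue (S j))"
      unfolding T_def by (rule measure_UNION_le) (auto simp: S_def intro!: lmeasurable_compact slab_compact fmeasurableD)
    also have "\<dots> \<le> (\<Sum>j<m. e / (real m + 1))"
      using K by (intro sum_mono) (auto simp: S_def \<delta>_def less_imp_le)
    also have "\<dots> = real m * (e / (real m + 1))" by simp
    also have "\<dots> \<le> e" using e by (simp add: field_simps)
    finally show ?thesis .
  qed
  have "\<forall>j. \<exists>q. \<forall>z. cmod z \<le> 2 * R \<and> \<delta> \<le> \<bar>Re z - \<tau> j\<bar> \<longrightarrow>
           cmod (poly q z - (if \<tau> j \<le> Re z then 1 else 0)) < e2"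
    using heavi_poly[OF d e2] by blast
  from choice[OF this] obtain Q where Q0: "\<forall>j. \<forall>z. cmod z \<le> 2 * R \<and> \<delta> \<le> \<bar>Re z - \<tau> j\<bar> \<longrightarrow>
           cmod (poly (Q j) z - (if \<tau> j \<le> Re z then 1 else 0)) < e2"
    by blast
  have Q: "cmod (poly (Q j) z - (if \<tau> j \<le> Re z then 1 else 0)) < e2"
    if "cmod z \<le> 2 * R \<and> \<delta> \<le> \<bar>Re z - \<tau> j\<bar>" for j z using Q0 that by blast
  define pF where "pF = [:of_real (g \<alpha>):] + (\<Sum>j<m. smult (of_real (\<Delta> j)) (Q j))"
  define h where "h x = Re (poly pF (of_real (a \<bullet> x) + \<i> * of_real (b \<bullet> x)))" for x
  have harm: "harmonic h"
    unfolding h_def by (rule harmonic_ridge[OF b(1) b(2)[symmetric]])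
  show ?thesis
  proof (intro exI[of _ h] exI[of _ T] conjI ballI harm Tm Tmeas)
    fix x assume x: "x \<in> cball 0 r - T"
    define s where "s = a \<bullet> x"
    define y where "y = b \<bullet> x"
    define z where "z = of_real s + \<i> * of_real y"
    have Rez: "Re z = s" by (simp add: z_def)
    have Imz: "Im z = y" by (simp add: z_def)
    have sR: "\<bar>s\<bar> \<le> R" "\<bar>y\<bar> \<le> R" using sx x by (auto simp: s_def y_def)
    have cz: "cmod z \<le> 2 * R" using cmod_le[of z] sR Rez Imz by linarith
    have far: "\<delta> \<le> \<bar>Re z - \<tau> j\<bar>" if j: "j < m" for j
    proof -
      have "x \<notin> S j" using x j unfolding T_def by blast
      then show ?thesis using x by (auto simp: S_def Rez s_def)
    qed
    define \<sigma> where "\<sigma> = g \<alpha> + (\<Sum>j<m. if \<tau> j \<le> s then \<Delta> j else 0)"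
    have step: "\<bar>\<sigma> - g s\<bar> \<le> \<bar>c\<bar> * \<eta>"
    proof -
      have "\<alpha> \<le> s" using sR by (simp add: \<alpha>_def)
      moreover have "s \<le> \<alpha> + real m * \<eta>" using sR meta by (simp add: \<alpha>_def)
      moreover have "\<sigma> = g \<alpha> + (\<Sum>j<m. if \<alpha> + real (Suc j) * \<eta> \<le> s
            then g (\<alpha> + real (Suc j) * \<eta>) - g (\<alpha> + real j * \<eta>) else 0)"
        unfolding \<sigma>_def \<tau>_def \<Delta>_def by (rule refl)
      ultimately show ?thesis
        using step_approx[OF eta lip, of "\<alpha>" s m] by simp
    qed
    have pz: "poly pF z = of_real (g \<alpha>) + (\<Sum>j<m. of_real (\<Delta> j) * poly (Q j) z)"
      by (simp add: pF_def poly_sum)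
    have ors: "of_real \<sigma> = of_real (g \<alpha>) + (\<Sum>j<m. of_real (\<Delta> j) * (if \<tau> j \<le> Re z then 1 else 0))"
      unfolding \<sigma>_def of_real_add of_real_sum Rez by (intro arg_cong2[where f = "(+)"] sum.cong) auto
    have "poly pF z - of_real \<sigma> = (\<Sum>j<m. of_real (\<Delta> j) * (poly (Q j) z - (if \<tau> j \<le> Re z then 1 else 0)))"
      unfolding pz ors by (simp add: sum_subtractf[symmetric] right_diff_distrib)
    then have "cmod (poly pF z - of_real \<sigma>) \<le> (\<Sum>j<m. cmod (of_real (\<Delta> j) * (poly (Q j) z - (if \<tau> j \<le> Re z then 1 else 0))))"
      by (simp add: norm_sum)
    also have "\<dots> \<le> (\<Sum>j<m. \<bar>\<Delta> j\<bar> * e2)"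
    proof (rule sum_mono)
      fix j assume "j \<in> {..<m}"
      then have "cmod (poly (Q j) z - (if \<tau> j \<le> Re z then 1 else 0)) < e2" using Q cz far by auto
      then show "cmod (of_real (\<Delta> j) * (poly (Q j) z - (if \<tau> j \<le> Re z then 1 else 0))) \<le> \<bar>\<Delta> j\<bar> * e2"
        by (simp add: norm_mult mult_left_mono less_imp_le)
    qed
    also have "\<dots> = SD * e2" by (simp add: SD_def sum_distrib_right)
    finally have c1: "cmod (poly pF z - of_real \<sigma>) < e / 2" using SDe2 by linarith
    have "\<bar>h x - \<sigma>\<bar> = \<bar>Re (poly pF z - of_real \<sigma>)\<bar>" by (simp add: h_def z_def s_def y_def)
    also have "\<dots> \<le> cmod (poly pF z - of_real \<sigma>)" by (rule abs_Re_le_cmod)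
    finally have c2: "\<bar>h x - \<sigma>\<bar> < e / 2" using c1 by linarith
    have "c * cos (a \<bullet> x + \<phi>) = g s" by (simp add: g_def s_def)
    then show "\<bar>h x - c * cos (a \<bullet> x + \<phi>)\<bar> < e" using c2 step ceta by linarith
  qed
qed


definition happrox :: "(real^'n) set \<Rightarrow> (real^'n \<Rightarrow> real) \<Rightarrow> bool" where
  "happrox S f \<longleftrightarrow> (\<forall>e>0. \<exists>h T. harmonic h \<and> T \<in> lmeasurable \<and> measure lebesgue T \<le> e \<and>
        (\<forall>x\<in>S - T. \<bar>h x - f x\<bar> < e))"

lemma happrox_add:
  assumes "happrox S f" "happrox S g"
  shows "happrox S (\<lambda>x. f x + g x)"
  unfolding happrox_def
proof (intro allI impI)
  fix e :: real assume e: "e > 0"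
  obtain h1 T1 where 1: "harmonic h1" "T1 \<in> lmeasurable" "measure lebesgue T1 \<le> e/2"
      "\<forall>x\<in>S - T1. \<bar>h1 x - f x\<bar> < e/2"
    using assms(1) e unfolding happrox_def by (meson half_gt_zero)
  obtain h2 T2 where 2: "harmonic h2" "T2 \<in> lmeasurable" "measure lebesgue T2 \<le> e/2"
      "\<forall>x\<in>S - T2. \<bar>h2 x - g x\<bar> < e/2"
    using assms(2) e unfolding happrox_def by (meson half_gt_zero)
  show "\<exists>h T. harmonic h \<and> T \<in> lmeasurable \<and> measure lebesgue T \<le> e \<and>
        (\<forall>x\<in>S - T. \<bar>h x - (f x + g x)\<bar> < e)"
  proof (intro exI[of _ "\<lambda>x. h1 x + h2 x"] exI[of _ "T1 \<union> T2"] conjI ballI)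
    show "harmonic (\<lambda>x. h1 x + h2 x)" using 1(1) 2(1) by (rule harmonic_add)
    show "T1 \<union> T2 \<in> lmeasurable" using 1(2) 2(2) by (rule fmeasurable.Un)
    have "measure lebesgue (T1 \<union> T2) \<le> measure lebesgue T1 + measure lebesgue T2"
      using 1(2) 2(2) by (intro measure_Un_le) auto
    then show "measure lebesgue (T1 \<union> T2) \<le> e" using 1(3) 2(3) by linarith
    fix x assume "x \<in> S - (T1 \<union> T2)"
    then have "\<bar>h1 x - f x\<bar> < e/2" "\<bar>h2 x - g x\<bar> < e/2" using 1(4) 2(4) by auto
    then show "\<bar>h1 x + h2 x - (f x + g x)\<bar> < e" by arith
  qed
qed

lemma happrox_zero: "happrox S (\<lambda>x. 0)"
  unfolding happrox_def
  by (intro allI impI exI[of _ "\<lambda>x. 0"] exI[of _ "{}"]) (auto intro: harmonic_const)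

lemma happrox_sum:
  assumes "finite I" "\<And>i. i \<in> I \<Longrightarrow> happrox S (g i)"
  shows "happrox S (\<lambda>x. \<Sum>i\<in>I. g i x)"
  using assms
proof (induction I rule: finite_induct)
  case empty
  then show ?case using happrox_zero by simp
next
  case (insert i I)
  then have "happrox S (\<lambda>x. g i x + (\<Sum>i\<in>I. g i x))" by (intro happrox_add) auto
  then show ?case using insert by simp
qed

lemma happrox_limit:
  assumes "\<And>e. e > 0 \<Longrightarrow> \<exists>g T. happrox S g \<and> T \<in> lmeasurable \<and> measure lebesgue T \<le> e \<and>
              (\<forall>x\<in>S - T. \<bar>g x - f x\<bar> < e)"
  shows "happrox S f"
  unfolding happrox_def
proof (intro allI impI)
  fix e :: real assume e: "e > 0"
  obtain g T1 where 1: "happrox S g" "T1 \<in> lmeasurable" "measure lebesgue T1 \<le> e/2"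
      "\<forall>x\<in>S - T1. \<bar>g x - f x\<bar> < e/2"
    using assms[of "e/2"] e by auto
  obtain h T2 where 2: "harmonic h" "T2 \<in> lmeasurable" "measure lebesgue T2 \<le> e/2"
      "\<forall>x\<in>S - T2. \<bar>h x - g x\<bar> < e/2"
    using 1(1) e unfolding happrox_def by (meson half_gt_zero)
  show "\<exists>h T. harmonic h \<and> T \<in> lmeasurable \<and> measure lebesgue T \<le> e \<and>
        (\<forall>x\<in>S - T. \<bar>h x - f x\<bar> < e)"
  proof (intro exI[of _ h] exI[of _ "T1 \<union> T2"] conjI ballI)
    show "harmonic h" by (rule 2(1))
    show "T1 \<union> T2 \<in> lmeasurable" using 1(2) 2(2) by (rule fmeasurable.Un)
    have "measure lebesgue (T1 \<union> T2) \<le> measure lebesgue T1 + measure lebesgue T2"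
      using 1(2) 2(2) by (intro measure_Un_le) auto
    then show "measure lebesgue (T1 \<union> T2) \<le> e" using 1(3) 2(3) by linarith
    fix x assume "x \<in> S - (T1 \<union> T2)"
    then have "\<bar>g x - f x\<bar> < e/2" "\<bar>h x - g x\<bar> < e/2" using 1(4) 2(4) by auto
    then show "\<bar>h x - f x\<bar> < e" by arith
  qed
qed

inductive trig :: "(real^'n \<Rightarrow> real) \<Rightarrow> bool" where
  base: "trig (\<lambda>x. c * cos (a \<bullet> x + \<phi>))"
| add: "trig f \<Longrightarrow> trig g \<Longrightarrow> trig (\<lambda>x. f x + g x)"

lemma trig_mult_base:
  assumes "trig g"
  shows "trig (\<lambda>x. (c * cos (a \<bullet> x + \<phi>)) * g x)"
  using assms
proof (induction rule: trig.induct)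
  case (base d b \<psi>)
  have eq: "(\<lambda>x. (c * cos (a \<bullet> x + \<phi>)) * (d * cos (b \<bullet> x + \<psi>))) =
        (\<lambda>x. (c * d / 2) * cos ((a - b) \<bullet> x + (\<phi> - \<psi>)) + (c * d / 2) * cos ((a + b) \<bullet> x + (\<phi> + \<psi>)))"
    by (rule ext) (simp add: cos_times_cos inner_diff_left inner_add_left algebra_simps add_divide_distrib)
  show ?case unfolding eq by (intro trig.add trig.base)
next
  case (add f g)
  have "trig (\<lambda>x. c * cos (a \<bullet> x + \<phi>) * f x + c * cos (a \<bullet> x + \<phi>) * g x)"
    using add by (intro trig.add)
  then show ?case by (simp add: distrib_left)
qed

lemma trig_mult:
  assumes "trig f" "trig g"
  shows "trig (\<lambda>x. f x * g x)"
  using assms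
proof (induction rule: trig.induct)
  case (base c a \<phi>)
  then show ?case by (rule trig_mult_base)
next
  case (add f1 f2)
  have "trig (\<lambda>x. f1 x * g x + f2 x * g x)" using add by (intro trig.add)
  then show ?case by (simp add: distrib_right)
qed

lemma trig_const: "trig (\<lambda>x. c)"
  using trig.base[of c 0 0] by simp

lemma trig_cont: "trig f \<Longrightarrow> continuous_on S f"
  by (induction rule: trig.induct) (auto intro!: continuous_intros)

lemma trig_sep:
  fixes x y :: "real^'n"
  assumes "x \<noteq> y"
  shows "\<exists>f. trig f \<and> f x \<noteq> f y"
proof -
  define \<kappa> where "\<kappa> = 1 / ((norm (x - y) + 1) * (norm x + norm y + 1))"
  have kp: "\<kappa> > 0" unfolding \<kappa>_def by (simp add: add_nonneg_pos)
  define a where "a = \<kappa> *\<^sub>R (x - y)"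
  have bd: "\<bar>a \<bullet> w\<bar> \<le> 1" if "norm w \<le> norm x + norm y" for w
  proof -
    have "\<bar>a \<bullet> w\<bar> \<le> norm a * norm w" by (rule Cauchy_Schwarz_ineq2)
    also have "\<dots> = \<kappa> * norm (x - y) * norm w" using kp by (simp add: a_def)
    also have "\<dots> \<le> \<kappa> * ((norm (x - y) + 1) * (norm x + norm y + 1))"
    proof -
      have "norm (x - y) * norm w \<le> (norm (x - y) + 1) * (norm x + norm y + 1)"
        by (rule mult_mono) (use that in auto)
      then show ?thesis using kp by (simp add: mult.assoc mult_left_mono)
    qed
    also have "\<dots> = 1"
    proof -
      have "norm (x - y) + 1 > 0" "norm x + norm y + 1 > 0" by (smt (verit) norm_ge_zero)+
      then show ?thesis unfolding \<kappa>_def by simp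
    qed
    finally show ?thesis .
  qed
  have bx: "\<bar>a \<bullet> x\<bar> \<le> 1" by (rule bd) simp
  have by': "\<bar>a \<bullet> y\<bar> \<le> 1" by (rule bd) simp
  have ne: "a \<bullet> x \<noteq> a \<bullet> y"
  proof -
    have "a \<bullet> x - a \<bullet> y = \<kappa> * ((x - y) \<bullet> (x - y))" by (simp add: a_def inner_diff_right right_diff_distrib)
    moreover have "(x - y) \<bullet> (x - y) > 0" using assms by simp
    ultimately show ?thesis using kp by auto
  qed
  have pi2: "1 \<le> pi / 2" using pi_gt3 by simp
  show ?thesis
  proof (intro exI[of _ "\<lambda>w. 1 * cos (a \<bullet> w + pi / 2)"] conjI)
    show "trig (\<lambda>w. 1 * cos (a \<bullet> w + pi / 2))" by (rule trig.base)
    show "1 * cos (a \<bullet> x + pi / 2) \<noteq> 1 * cos (a \<bullet> y + pi / 2)"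
    proof
      assume "1 * cos (a \<bullet> x + pi / 2) = 1 * cos (a \<bullet> y + pi / 2)"
      then have eq: "cos (a \<bullet> x + pi / 2) = cos (a \<bullet> y + pi / 2)" by simp
      have bx': "-1 \<le> a \<bullet> x" "a \<bullet> x \<le> 1" using bx by (simp_all add: abs_le_iff)
      have by'': "-1 \<le> a \<bullet> y" "a \<bullet> y \<le> 1" using by' by (simp_all add: abs_le_iff)
      have "a \<bullet> x + pi / 2 = a \<bullet> y + pi / 2"
        by (rule cos_inj_pi[OF _ _ _ _ eq]) (use bx' by'' pi2 in linarith)+
      then show False using ne by simp
    qed
  qed
qed

lemma happrox_trig:
  assumes n2: "CARD('n) \<ge> 2" and "trig (f :: real^'n \<Rightarrow> real)"
  shows "happrox (cball 0 r) f"
  using assms(2)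
proof (induction rule: trig.induct)
  case (base c a \<phi>)
  show ?case unfolding happrox_def using ridge_approx[OF n2] by blast
next
  case (add f g)
  show ?case by (rule happrox_add[OF add.IH])
qed

lemma happrox_continuous:
  fixes f :: "real^'n \<Rightarrow> real"
  assumes n2: "CARD('n) \<ge> 2" and f: "continuous_on (cball 0 r) f"
  shows "happrox (cball 0 r) f"
proof (rule happrox_limit)
  fix e :: real assume e: "e > 0"
  have "\<exists>g. trig g \<and> (\<forall>x\<in>cball 0 r. \<bar>f x - g x\<bar> < e)"
  proof (rule Stone_Weierstrass_HOL[of "cball 0 r" trig f e])
    show "compact (cball (0::real^'n) r)" by simp
    show "trig (\<lambda>x. c)" for c by (rule trig_const)
    show "continuous_on (cball 0 r) g" if "trig g" for g using that by (rule trig_cont)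
    show "trig (\<lambda>x. g x + h x)" if "trig g \<and> trig h" for g h using that by (simp add: trig.add)
    show "trig (\<lambda>x. g x * h x)" if "trig g \<and> trig h" for g h using that by (simp add: trig_mult)
    show "\<exists>g. trig g \<and> g x \<noteq> g y" if "x \<in> cball 0 r \<and> y \<in> cball 0 r \<and> x \<noteq> y" for x y
      using that trig_sep by blast
    show "continuous_on (cball 0 r) f" by (rule f)
    show "0 < e" by (rule e)
  qed
  then obtain g where g: "trig g" "\<forall>x\<in>cball 0 r. \<bar>f x - g x\<bar> < e" by blast
  show "\<exists>g T. happrox (cball 0 r) g \<and> T \<in> lmeasurable \<and> measure lebesgue T \<le> e \<and>
              (\<forall>x\<in>cball 0 r - T. \<bar>g x - f x\<bar> < e)"
    using happrox_trig[OF n2 g(1)] g(2) e by (intro exI[of _ g] exI[of _ "{}"]) (auto simp: abs_minus_commute)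
qed


lemma happrox_indicator:
  fixes A :: "(real^'n) set"
  assumes n2: "CARD('n) \<ge> 2" and A: "A \<in> sets lebesgue"
  shows "happrox (cball 0 r) (\<lambda>x. c * indicator A x)"
proof (rule happrox_limit)
  fix e :: real assume e: "e > 0"
  define A' where "A' = A \<inter> cball 0 r"
  have cb: "cball (0::real^'n) r \<in> sets lebesgue" using lmeasurable_cball fmeasurableD by blast
  have A': "A' \<in> sets lebesgue" unfolding A'_def using A cb by (rule sets.Int)
  have e2: "e / 2 > 0" using e by simp
  obtain C where C: "closed C" "C \<subseteq> A'" "A' - C \<in> lmeasurable" "emeasure lebesgue (A' - C) < ennreal (e/2)"
    using sets_lebesgue_inner_closed[OF A' e2] by blast
  obtain U where U: "open U" "A' \<subseteq> U" "U - A' \<in> lmeasurable" "emeasure lebesgue (U - A') < ennreal (e/2)"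
    using sets_lebesgue_outer_open[OF A' e2] by blast
  have cC: "closedin (top_of_set UNIV) C" using C(1) by simp
  have cU: "closedin (top_of_set UNIV) (- U)" using U(1) by (simp add: closed_Compl)
  have dj: "C \<inter> - U = {}" using C(2) U(2) by auto
  obtain f :: "real^'n \<Rightarrow> real" where f: "continuous_on UNIV f"
      "\<And>x. x \<in> UNIV \<Longrightarrow> f x \<in> closed_segment c 0" "\<And>x. x \<in> C \<Longrightarrow> f x = c"
      "\<And>x. x \<in> - U \<Longrightarrow> f x = 0"
    by (rule Urysohn_local[OF cC cU dj, where a=c and b=0]) auto
  have m1: "measure lebesgue (A' - C) \<le> e / 2"
  proof -
    have "ennreal (measure lebesgue (A' - C)) < ennreal (e/2)"
      using C(4) emeasure_eq_measure2[OF C(3)] by simp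
    then have "measure lebesgue (A' - C) < e/2"
      using ennreal_less_iff[of "measure lebesgue (A' - C)" "e/2"] by simp
    then show ?thesis by (rule less_imp_le)
  qed
  have m2: "measure lebesgue (U - A') \<le> e / 2"
  proof -
    have "ennreal (measure lebesgue (U - A')) < ennreal (e/2)"
      using U(4) emeasure_eq_measure2[OF U(3)] by simp
    then have "measure lebesgue (U - A') < e/2"
      using ennreal_less_iff[of "measure lebesgue (U - A')" "e/2"] by simp
    then show ?thesis by (rule less_imp_le)
  qed
  show "\<exists>g T. happrox (cball 0 r) g \<and> T \<in> lmeasurable \<and> measure lebesgue T \<le> e \<and>
              (\<forall>x\<in>cball 0 r - T. \<bar>g x - c * indicator A x\<bar> < e)"
  proof (intro exI[of _ f] exI[of _ "(A' - C) \<union> (U - A')"] conjI ballI)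
    show "happrox (cball 0 r) f"
      using n2 continuous_on_subset[OF f(1)] by (intro happrox_continuous) auto
    show "(A' - C) \<union> (U - A') \<in> lmeasurable" using C(3) U(3) by (rule fmeasurable.Un)
    have "measure lebesgue ((A' - C) \<union> (U - A')) \<le> measure lebesgue (A' - C) + measure lebesgue (U - A')"
      using C(3) U(3) by (intro measure_Un_le) auto
    then show "measure lebesgue ((A' - C) \<union> (U - A')) \<le> e" using m1 m2 by linarith
    fix x assume x: "x \<in> cball 0 r - ((A' - C) \<union> (U - A'))"
    show "\<bar>f x - c * indicator A x\<bar> < e"
    proof (cases "x \<in> A")
      case True
      then have "x \<in> C" using x by (auto simp: A'_def)
      then show ?thesis using f(3) True e by simp
    next
      case False
      then have "x \<in> - U" using x by (auto simp: A'_def)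
      then show ?thesis using f(4) False e by simp
    qed
  qed
qed

lemma happrox_finite_valued:
  fixes f :: "real^'n \<Rightarrow> real"
  assumes n2: "CARD('n) \<ge> 2" and fin: "finite F" and rng: "\<And>x. f x \<in> F"
    and meas: "\<And>y. y \<in> F \<Longrightarrow> f -` {y} \<in> sets lebesgue"
  shows "happrox (cball 0 r) f"
proof -
  have "happrox (cball 0 r) (\<lambda>x. \<Sum>y\<in>F. y * indicator (f -` {y}) x)"
    by (intro happrox_sum fin happrox_indicator n2 meas)
  moreover have "(\<lambda>x. \<Sum>y\<in>F. y * indicator (f -` {y}) x) = f"
  proof
    fix x
    have "(\<Sum>y\<in>F. y * indicator (f -` {y}) x) = (\<Sum>y\<in>F. if y = f x then y else 0)"
      by (intro sum.cong) (auto simp: indicator_def)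
    also have "\<dots> = f x" using fin rng[of x] by (simp add: sum.delta)
    finally show "(\<Sum>y\<in>F. y * indicator (f -` {y}) x) = f x" .
  qed
  ultimately show ?thesis by simp
qed

lemma happrox_measurable:
  fixes v :: "real^'n \<Rightarrow> real"
  assumes n2: "CARD('n) \<ge> 2" and v: "v \<in> borel_measurable lebesgue"
  shows "happrox (cball 0 r) v"
proof (rule happrox_limit)
  fix e :: real assume e: "e > 0"
  have [measurable]: "v \<in> borel_measurable lebesgue" by (rule v)
  define B where "B N = {x\<in>cball 0 r. real N \<le> \<bar>v x\<bar>}" for N :: nat
  have cb: "cball (0::real^'n) r \<in> sets lebesgue" using lmeasurable_cball fmeasurableD by blast
  have Bs: "B N \<in> sets lebesgue" for N
  proof -
    have "{x\<in>space lebesgue. real N \<le> \<bar>v x\<bar>} \<in> sets lebesgue" by measurable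
    then have "{x. real N \<le> \<bar>v x\<bar>} \<in> sets lebesgue" by simp
    then have "cball 0 r \<inter> {x. real N \<le> \<bar>v x\<bar>} \<in> sets lebesgue" using cb by (intro sets.Int)
    moreover have "B N = cball 0 r \<inter> {x. real N \<le> \<bar>v x\<bar>}" by (auto simp: B_def)
    ultimately show ?thesis by simp
  qed
  have Bl: "B N \<in> lmeasurable" for N
    by (rule fmeasurableI2[OF lmeasurable_cball[of 0 r]]) (use Bs in \<open>auto simp: B_def\<close>)
  have dB: "decseq B"
    by (rule decseq_SucI) (auto simp: B_def)
  have "(\<lambda>N. measure lebesgue (B N)) \<longlonglongrightarrow> measure lebesgue (\<Inter>N. B N)"
  proof (rule Lim_measure_decseq)
    show "range B \<subseteq> sets lebesgue" using Bs by auto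
    show "decseq B" by (rule dB)
    show "emeasure lebesgue (B N) \<noteq> \<infinity>" for N using fmeasurableD2[OF Bl[of N]] by simp
  qed
  moreover have "(\<Inter>N. B N) = {}"
  proof -
    have "x \<notin> (\<Inter>N. B N)" for x
    proof -
      obtain N :: nat where "\<bar>v x\<bar> < real N" using reals_Archimedean2 by blast
      then have "x \<notin> B N" by (auto simp: B_def)
      then show ?thesis by blast
    qed
    then show ?thesis by blast
  qed
  ultimately have "(\<lambda>N. measure lebesgue (B N)) \<longlonglongrightarrow> 0" by simp
  then obtain N0 where N0: "\<forall>N\<ge>N0. norm (measure lebesgue (B N) - 0) < e"
    using e unfolding LIMSEQ_iff by blast
  obtain N1 :: nat where N1: "1 / e < real N1" using reals_Archimedean2 by blast
  define N where "N = max (max N0 N1) 1"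
  have NN0: "N \<ge> N0" by (simp add: N_def)
  have Npos: "real N > 0" by (simp add: N_def)
  have Ne: "1 / real N < e"
  proof -
    have "1 / e < real N" using N1 by (simp add: N_def)
    then show ?thesis using e Npos by (simp add: field_simps)
  qed
  define w where "w x = (if \<bar>v x\<bar> < real N then of_int \<lfloor>real N * v x\<rfloor> / real N else 0)" for x
  have [measurable]: "w \<in> borel_measurable lebesgue" unfolding w_def by measurable
  define F where "F = (\<lambda>k. of_int k / real N) ` {- (int N * int N) .. int N * int N} \<union> {0}"
  have finF: "finite F" by (simp add: F_def)
  have rng: "w x \<in> F" for x
  proof (cases "\<bar>v x\<bar> < real N")
    case True
    have lo: "- (real N * real N) < real N * v x"
    proof -
      have "- real N < v x" using True by linarith
      then show ?thesis using Npos by (metis mult_minus_right mult_strict_left_mono)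
    qed
    have hi: "real N * v x < real N * real N"
    proof -
      have "v x < real N" using True by linarith
      then show ?thesis using Npos by (rule mult_strict_left_mono)
    qed
    have k1: "- (int N * int N) \<le> \<lfloor>real N * v x\<rfloor>"
      using lo by (simp add: le_floor_iff)
    have k2: "\<lfloor>real N * v x\<rfloor> \<le> int N * int N"
      using hi by (simp add: floor_le_iff)
    show ?thesis using True k1 k2 by (auto simp: w_def F_def)
  next
    case False
    then show ?thesis by (simp add: w_def F_def)
  qed
  have wmeas: "w -` {y} \<in> sets lebesgue" for y
  proof -
    have "{x\<in>space lebesgue. w x = y} \<in> sets lebesgue" by measurable
    moreover have "{x\<in>space lebesgue. w x = y} = w -` {y}" by auto
    ultimately show ?thesis by simp
  qed
  show "\<exists>g T. happrox (cball 0 r) g \<and> T \<in> lmeasurable \<and> measure lebesgue T \<le> e \<and>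
              (\<forall>x\<in>cball 0 r - T. \<bar>g x - v x\<bar> < e)"
  proof (intro exI[of _ w] exI[of _ "B N"] conjI ballI)
    show "happrox (cball 0 r) w" by (rule happrox_finite_valued[OF n2 finF rng wmeas])
    show "B N \<in> lmeasurable" by (rule Bl)
    show "measure lebesgue (B N) \<le> e" using N0 NN0 by (simp add: less_imp_le)
    fix x assume x: "x \<in> cball 0 r - B N"
    then have vx: "\<bar>v x\<bar> < real N" by (auto simp: B_def)
    have f1: "of_int \<lfloor>real N * v x\<rfloor> \<le> real N * v x" by (rule of_int_floor_le)
    have f2: "real N * v x < of_int \<lfloor>real N * v x\<rfloor> + 1" by (rule real_of_int_floor_add_one_gt)
    have "w x = of_int \<lfloor>real N * v x\<rfloor> / real N" using vx by (simp add: w_def)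
    moreover have "v x - 1 / real N < of_int \<lfloor>real N * v x\<rfloor> / real N"
    proof -
      have "(real N * v x - 1) / real N < of_int \<lfloor>real N * v x\<rfloor> / real N"
        using f2 Npos by (intro divide_strict_right_mono) auto
      moreover have "(real N * v x - 1) / real N = v x - 1 / real N" using Npos by (simp add: diff_divide_distrib)
      ultimately show ?thesis by simp
    qed
    moreover have "of_int \<lfloor>real N * v x\<rfloor> / real N \<le> v x"
    proof -
      have "of_int \<lfloor>real N * v x\<rfloor> / real N \<le> (real N * v x) / real N"
        using f1 Npos by (intro divide_right_mono) auto
      then show ?thesis using Npos by simp
    qed
    ultimately show "\<bar>w x - v x\<bar> < e" using Ne by linarith
  qed
qed


lemma harmonic_continuous:
  assumes "harmonic u"
  shows "continuous_on UNIV u"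
proof -
  obtain u' where "\<forall>x. (u has_derivative blinfun_apply (u' x)) (at x)"
    using assms unfolding harmonic_def by blast
  then show ?thesis
    by (intro continuous_at_imp_continuous_on ballI) (auto intro: has_derivative_continuous)
qed

theorem mainTheorem4:
  fixes u :: "real^'n \<Rightarrow> real"
  assumes "CARD('n) \<ge> 2"
    and "harmonic u"
    and "universal_uniform u"
  shows "\<forall>v :: real^'n \<Rightarrow> real. v \<in> borel_measurable lebesgue \<longrightarrow>
           (\<exists>a :: nat \<Rightarrow> real^'n. \<forall>K. compact K \<longrightarrow> (\<forall>e>0.
              ((\<lambda>j. measure lebesgue {x\<in>K. \<bar>u (x + a j) - v x\<bar> > e}) \<longlonglongrightarrow> 0)))"
proof (intro allI impI)
  fix v :: "real^'n \<Rightarrow> real"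
  assume v: "v \<in> borel_measurable lebesgue"
  have n2: "CARD('n) \<ge> 2" by (rule assms(1))
  have uc: "continuous_on UNIV u" using assms(2) by (rule harmonic_continuous)
  have "\<forall>m::nat. \<exists>a T. T \<in> lmeasurable \<and> measure lebesgue T \<le> inverse (real (Suc m)) \<and>
          (\<forall>x\<in>cball 0 (real m) - T. \<bar>u (x + a) - v x\<bar> < 2 * inverse (real (Suc m)))"
  proof
    fix m :: nat
    define \<epsilon> where "\<epsilon> = inverse (real (Suc m))"
    have ep: "\<epsilon> > 0" by (simp add: \<epsilon>_def)
    have "happrox (cball 0 (real m)) v" by (rule happrox_measurable[OF n2 v])
    then obtain h T where hT: "harmonic h" "T \<in> lmeasurable" "measure lebesgue T \<le> \<epsilon>"
        "\<forall>x\<in>cball 0 (real m) - T. \<bar>h x - v x\<bar> < \<epsilon>"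
      using ep unfolding happrox_def by blast
    obtain a where a: "\<forall>x\<in>cball 0 (real m). \<bar>u (x + a) - h x\<bar> < \<epsilon>"
      using assms(3) hT(1) ep unfolding universal_uniform_def by (meson compact_cball)
    show "\<exists>a T. T \<in> lmeasurable \<and> measure lebesgue T \<le> inverse (real (Suc m)) \<and>
          (\<forall>x\<in>cball 0 (real m) - T. \<bar>u (x + a) - v x\<bar> < 2 * inverse (real (Suc m)))"
    proof (intro exI[of _ a] exI[of _ T] conjI ballI)
      show "T \<in> lmeasurable" by (rule hT(2))
      show "measure lebesgue T \<le> inverse (real (Suc m))" using hT(3) by (simp add: \<epsilon>_def)
      fix x assume x: "x \<in> cball 0 (real m) - T"
      have "\<bar>u (x + a) - h x\<bar> < \<epsilon>" using a x by auto
      moreover have "\<bar>h x - v x\<bar> < \<epsilon>" using hT(4) x by auto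
      ultimately show "\<bar>u (x + a) - v x\<bar> < 2 * inverse (real (Suc m))" unfolding \<epsilon>_def by arith
    qed
  qed
  then obtain A where "\<forall>m. \<exists>T. T \<in> lmeasurable \<and> measure lebesgue T \<le> inverse (real (Suc m)) \<and>
          (\<forall>x\<in>cball 0 (real m) - T. \<bar>u (x + A m) - v x\<bar> < 2 * inverse (real (Suc m)))"
    by (metis choice)
  then obtain TT where TT: "\<And>m. TT m \<in> lmeasurable" "\<And>m. measure lebesgue (TT m) \<le> inverse (real (Suc m))"
      "\<And>m. \<forall>x\<in>cball 0 (real m) - TT m. \<bar>u (x + A m) - v x\<bar> < 2 * inverse (real (Suc m))"
    by (metis choice)
  show "\<exists>a :: nat \<Rightarrow> real^'n. \<forall>K. compact K \<longrightarrow> (\<forall>e>0.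
              ((\<lambda>j. measure lebesgue {x\<in>K. \<bar>u (x + a j) - v x\<bar> > e}) \<longlonglongrightarrow> 0))"
  proof (intro exI[of _ A] allI impI)
    fix K :: "(real^'n) set" and e :: real
    assume K: "compact K" and e: "e > 0"
    obtain B where B: "\<forall>x\<in>K. norm x \<le> B" using compact_imp_bounded[OF K] unfolding bounded_iff by blast
    obtain M1 :: nat where M1: "B \<le> real M1" using real_arch_simple by blast
    obtain M2 :: nat where M2: "2 / e < real M2" using reals_Archimedean2 by blast
    have Ks: "K \<in> sets lebesgue" using lmeasurable_compact[OF K] fmeasurableD by blast
    have bound: "measure lebesgue {x\<in>K. \<bar>u (x + A j) - v x\<bar> > e} \<le> inverse (real (Suc j))"
      if j: "j \<ge> max M1 M2" for j
    proof -
      have sub: "{x\<in>K. \<bar>u (x + A j) - v x\<bar> > e} \<subseteq> TT j"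
      proof
        fix x assume x: "x \<in> {x\<in>K. \<bar>u (x + A j) - v x\<bar> > e}"
        show "x \<in> TT j"
        proof (rule ccontr)
          assume nT: "x \<notin> TT j"
          have "norm x \<le> real j" using B x M1 j by force
          then have "x \<in> cball 0 (real j) - TT j" using nT by (simp add: mem_cball_0)
          then have lt: "\<bar>u (x + A j) - v x\<bar> < 2 * inverse (real (Suc j))" using TT(3) by blast
          have "2 * inverse (real (Suc j)) < e"
          proof -
            have "2 / e < real (Suc j)" using M2 j by simp
            then show ?thesis using e by (simp add: field_simps)
          qed
          then show False using lt x by simp
        qed
      qed
      have meas: "{x\<in>K. \<bar>u (x + A j) - v x\<bar> > e} \<in> sets lebesgue"
      proof -
        have uc': "continuous_on UNIV (\<lambda>x. u (x + A j))"
          by (intro continuous_on_compose2[OF uc] continuous_intros) auto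
        have "(\<lambda>x. u (x + A j)) \<in> borel_measurable borel"
          by (rule borel_measurable_continuous_onI[OF uc'])
        then have [measurable]: "(\<lambda>x. u (x + A j)) \<in> borel_measurable lebesgue"
          by (intro measurable_completion) simp
        have [measurable]: "v \<in> borel_measurable lebesgue" by (rule v)
        have "{x\<in>space lebesgue. e < \<bar>u (x + A j) - v x\<bar>} \<in> sets lebesgue" by measurable
        then have "K \<inter> {x\<in>space lebesgue. e < \<bar>u (x + A j) - v x\<bar>} \<in> sets lebesgue"
          using Ks by (intro sets.Int)
        moreover have "K \<inter> {x\<in>space lebesgue. e < \<bar>u (x + A j) - v x\<bar>} = {x\<in>K. \<bar>u (x + A j) - v x\<bar> > e}"
          by auto
        ultimately show ?thesis by simp
      qed
      have "measure lebesgue {x\<in>K. \<bar>u (x + A j) - v x\<bar> > e} \<le> measure lebesgue (TT j)"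
        by (rule measure_mono_fmeasurable[OF sub meas TT(1)])
      then show ?thesis using TT(2)[of j] by linarith
    qed
    show "(\<lambda>j. measure lebesgue {x\<in>K. \<bar>u (x + A j) - v x\<bar> > e}) \<longlonglongrightarrow> 0"
    proof (rule tendsto_sandwich[OF _ _ tendsto_const LIMSEQ_inverse_real_of_nat])
      show "\<forall>\<^sub>F j in sequentially. 0 \<le> measure lebesgue {x\<in>K. \<bar>u (x + A j) - v x\<bar> > e}"
        by simp
      show "\<forall>\<^sub>F j in sequentially. measure lebesgue {x\<in>K. \<bar>u (x + A j) - v x\<bar> > e} \<le> inverse (real (Suc j))"
        using bound unfolding eventually_sequentially by blast
    qed
  qed
qed


end
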